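(* Let $A_0\to A_1\to\cdots$ be an $\omega$-chain in $\mathsf{SquaMS}$ with connecting morphisms $a_{k,\ell}$, and let $(C,(c_k)_k)$ be its colimit in $\mathsf{SquaMS}$. Then $(M\otimes C,(M\otimes c_k)_k)$ is the colimit of the chain $M\otimes A_0\to M\otimes A_1\to\cdots$ with connecting morphisms $M\otimes a_{k,\ell}$.
   Context: Let $M_0=\{(r,s)\in[0,1]^2: r\in\{0,1\}\text{ or } s\in\{0,1\}\}$. A square metric space is a pair $(X,S_X)$ with $X$ a metric space with all distances at most $2$ and $S_X\colon M_0\to X$ injective such that (sq1) for $i\in\{0,1\}$, $r,s\in[0,1]$: $d_X(S_X(i,r),S_X(i,s))=|s-r|$ and $d_X(S_X(r,i),S_X(s,i))=|s-r|$; (sq2) $d_X(S_X(r,s),S_X(t,u))\ge|r-t|+|s-u|$. $\mathsf{SquaMS}$: these objects, with short maps $f$ satisfying $f\circ S_X=S_Y$ as morphisms. Let $N=\{0,1,2\}^2$, $M=N\setminus\{(1,1)\}$, also viewed as points of $\mathbb{R}^2$. For $X$ in $\mathsf{SquaMS}$, $M\otimes X=(M\times X)/\!\sim$, where $\sim$ is generated by $(m,S_X(p))\sim(n,S_X(q))$ whenever $m,n\in M$ differ by exactly $1$ in exactly one coordinate and $(m+p)/3=(n+q)/3$; $m\otimes x$ is the class of $(m,x)$. With $d((a,u),(b,v))=\frac13 d_X(u,v)$ if $a=b$ and $2$ otherwise, $M\otimes X$ has the quotient metric (infimum over finite chains of sums of consecutive distances, $\sim$-related consecutive pairs counting $0$).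 $S_{M\otimes X}(p)=m\otimes S_X(3p-m)$ for any $m\in M$ with $p\in(m+[0,1]^2)/3$; $(M\otimes f)(m\otimes x)=m\otimes f(x)$. *)

theory Defs
  imports Main "HOL.Real"
begin

record 'a sqms =
  sq_carrier :: "'a set"
  sq_dist :: "'a \<Rightarrow> 'a \<Rightarrow> real"
  sq_map :: "real \<times> real \<Rightarrow> 'a"

definition M0 :: "(real \<times> real) set" where
  "M0 = {(r, s). 0 \<le> r \<and> r \<le> 1 \<and> 0 \<le> s \<and> s \<le> 1 \<and> (r \<in> {0, 1} \<or> s \<in> {0, 1})}"

definition is_sqms :: "'a sqms \<Rightarrow> bool" where
  "is_sqms X \<longleftrightarrow>
     (let C = sq_carrier X; d = sq_dist X; S = sq_map X in
       (\<forall>x\<in>C. \<forall>y\<in>C. 0 \<le> d x y \<and> d x y \<le> 2 \<and> (d x y = 0 \<longleftrightarrow> x = y) \<and> d x y = d y x) \<and>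
       (\<forall>x\<in>C. \<forall>y\<in>C. \<forall>z\<in>C. d x z \<le> d x y + d y z) \<and>
       S ` M0 \<subseteq> C \<and> inj_on S M0 \<and>
       (\<forall>i\<in>{0, 1}. \<forall>r\<in>{0..1}. \<forall>s\<in>{0..1}.
          d (S (i, r)) (S (i, s)) = \<bar>s - r\<bar> \<and> d (S (r, i)) (S (s, i)) = \<bar>s - r\<bar>) \<and>
       (\<forall>p\<in>M0. \<forall>q\<in>M0. d (S p) (S q) \<ge> \<bar>fst p - fst q\<bar> + \<bar>snd p - snd q\<bar>))"

definition sq_hom :: "'a sqms \<Rightarrow> 'b sqms \<Rightarrow> ('a \<Rightarrow> 'b) \<Rightarrow> bool" where
  "sq_hom X Y f \<longleftrightarrow>
     f ` sq_carrier X \<subseteq> sq_carrier Y \<and>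
     (\<forall>x\<in>sq_carrier X. \<forall>y\<in>sq_carrier X. sq_dist Y (f x) (f y) \<le> sq_dist X x y) \<and>
     (\<forall>p\<in>M0. f (sq_map X p) = sq_map Y p)"

definition sq_chain :: "(nat \<Rightarrow> 'a sqms) \<Rightarrow> (nat \<Rightarrow> nat \<Rightarrow> 'a \<Rightarrow> 'a) \<Rightarrow> bool" where
  "sq_chain A a \<longleftrightarrow>
     (\<forall>k. is_sqms (A k)) \<and>
     (\<forall>k l. k \<le> l \<longrightarrow> sq_hom (A k) (A l) (a k l)) \<and>
     (\<forall>k. \<forall>x\<in>sq_carrier (A k). a k k x = x) \<and>
     (\<forall>k l m. k \<le> l \<longrightarrow> l \<le> m \<longrightarrow> (\<forall>x\<in>sq_carrier (A k). a l m (a k l x) = a k m x))"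

definition sq_cocone ::
  "(nat \<Rightarrow> 'a sqms) \<Rightarrow> (nat \<Rightarrow> nat \<Rightarrow> 'a \<Rightarrow> 'a) \<Rightarrow> 'd sqms \<Rightarrow> (nat \<Rightarrow> 'a \<Rightarrow> 'd) \<Rightarrow> bool" where
  "sq_cocone A a D g \<longleftrightarrow>
     is_sqms D \<and> (\<forall>k. sq_hom (A k) D (g k)) \<and>
     (\<forall>k l. k \<le> l \<longrightarrow> (\<forall>x\<in>sq_carrier (A k). g l (a k l x) = g k x))"

text \<open>Colimit: universal among cocones whose vertex lives in the type 'd
  (maps are identified when they agree on the carrier).\<close>
definition sq_colimit ::
  "'d itself \<Rightarrow> (nat \<Rightarrow> 'a sqms) \<Rightarrow> (nat \<Rightarrow> nat \<Rightarrow> 'a \<Rightarrow> 'a) \<Rightarrow> 'c sqms \<Rightarrow> (nat \<Rightarrow> 'a \<Rightarrow> 'c) \<Rightarrow> bool" where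
  "sq_colimit T A a C c \<longleftrightarrow>
     sq_cocone A a C c \<and>
     (\<forall>(D :: 'd sqms) g. sq_cocone A a D g \<longrightarrow>
        (\<exists>h. sq_hom C D h \<and> (\<forall>k. \<forall>x\<in>sq_carrier (A k). h (c k x) = g k x)) \<and>
        (\<forall>h h'. sq_hom C D h \<and> (\<forall>k. \<forall>x\<in>sq_carrier (A k). h (c k x) = g k x) \<and>
                sq_hom C D h' \<and> (\<forall>k. \<forall>x\<in>sq_carrier (A k). h' (c k x) = g k x) \<longrightarrow>
                (\<forall>y\<in>sq_carrier C. h y = h' y)))"

definition Mset :: "(nat \<times> nat) set" where
  "Mset = {(i, j). i \<le> 2 \<and> j \<le> 2} - {(1, 1)}"

definition adjacent :: "nat \<times> nat \<Rightarrow> nat \<times> nat \<Rightarrow> bool" where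
  "adjacent m n \<longleftrightarrow>
     (fst m = fst n \<and> (snd m = snd n + 1 \<or> snd n = snd m + 1)) \<or>
     (snd m = snd n \<and> (fst m = fst n + 1 \<or> fst n = fst m + 1))"

definition tens_gen :: "'a sqms \<Rightarrow> (((nat \<times> nat) \<times> 'a) \<times> ((nat \<times> nat) \<times> 'a)) set" where
  "tens_gen X = {((m, sq_map X p), (n, sq_map X q)) | m n p q.
      m \<in> Mset \<and> n \<in> Mset \<and> adjacent m n \<and> p \<in> M0 \<and> q \<in> M0 \<and>
      (real (fst m) + fst p) / 3 = (real (fst n) + fst q) / 3 \<and>
      (real (snd m) + snd p) / 3 = (real (snd n) + snd q) / 3}"

definition tens_rel :: "'a sqms \<Rightarrow> (((nat \<times> nat) \<times> 'a) \<times> ((nat \<times> nat) \<times> 'a)) set" where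
  "tens_rel X = (tens_gen X \<union> (tens_gen X)\<inverse>)\<^sup>*"

definition tens_pt :: "'a sqms \<Rightarrow> nat \<times> nat \<Rightarrow> 'a \<Rightarrow> ((nat \<times> nat) \<times> 'a) set" where
  "tens_pt X m x = tens_rel X `` {(m, x)}"

definition tens_carrier :: "'a sqms \<Rightarrow> ((nat \<times> nat) \<times> 'a) set set" where
  "tens_carrier X = {tens_pt X m x | m x. m \<in> Mset \<and> x \<in> sq_carrier X}"

definition tens_cost :: "'a sqms \<Rightarrow> (nat \<times> nat) \<times> 'a \<Rightarrow> (nat \<times> nat) \<times> 'a \<Rightarrow> real" where
  "tens_cost X z w =
     (if (z, w) \<in> tens_rel X then 0
      else if fst z = fst w then sq_dist X (snd z) (snd w) / 3 else 2)"

definition tens_dist :: "'a sqms \<Rightarrow> ((nat \<times> nat) \<times> 'a) set \<Rightarrow> ((nat \<times> nat) \<times> 'a) set \<Rightarrow> real" where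
  "tens_dist X P Q = Inf {(\<Sum>i<length zs - 1. tens_cost X (zs ! i) (zs ! Suc i)) | zs.
      zs \<noteq> [] \<and> set zs \<subseteq> Mset \<times> sq_carrier X \<and> hd zs \<in> P \<and> last zs \<in> Q}"

definition tens_sq :: "'a sqms \<Rightarrow> real \<times> real \<Rightarrow> ((nat \<times> nat) \<times> 'a) set" where
  "tens_sq X p =
     (let m = (SOME m. m \<in> Mset \<and> 0 \<le> 3 * fst p - real (fst m) \<and> 3 * fst p - real (fst m) \<le> 1
                          \<and> 0 \<le> 3 * snd p - real (snd m) \<and> 3 * snd p - real (snd m) \<le> 1)
      in tens_pt X m (sq_map X (3 * fst p - real (fst m), 3 * snd p - real (snd m))))"

definition tens :: "'a sqms \<Rightarrow> ((nat \<times> nat) \<times> 'a) set sqms" where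
  "tens X = \<lparr>sq_carrier = tens_carrier X, sq_dist = tens_dist X, sq_map = tens_sq X\<rparr>"

definition tens_map :: "'a sqms \<Rightarrow> 'b sqms \<Rightarrow> ('a \<Rightarrow> 'b) \<Rightarrow> ((nat \<times> nat) \<times> 'a) set \<Rightarrow> ((nat \<times> nat) \<times> 'b) set" where
  "tens_map X Y f P = (let z = (SOME z. z \<in> P \<and> z \<in> Mset \<times> sq_carrier X) in tens_pt Y (fst z) (f (snd z)))"

end

theory Submission
  imports Defs Complex_Main
begin


context
  fixes X :: "'a sqms"
  assumes X: "is_sqms X"
begin

lemma sq_nonneg: "x \<in> sq_carrier X \<Longrightarrow> y \<in> sq_carrier X \<Longrightarrow> 0 \<le> sq_dist X x y"
  using X unfolding is_sqms_def Let_def by blast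
lemma sq_le2: "x \<in> sq_carrier X \<Longrightarrow> y \<in> sq_carrier X \<Longrightarrow> sq_dist X x y \<le> 2"
  using X unfolding is_sqms_def Let_def by blast
lemma sq_zero_iff: "x \<in> sq_carrier X \<Longrightarrow> y \<in> sq_carrier X \<Longrightarrow> sq_dist X x y = 0 \<longleftrightarrow> x = y"
  using X unfolding is_sqms_def Let_def by blast
lemma sq_zero[simp]: "x \<in> sq_carrier X \<Longrightarrow> sq_dist X x x = 0"
  using sq_zero_iff by blast
lemma sq_sym: "x \<in> sq_carrier X \<Longrightarrow> y \<in> sq_carrier X \<Longrightarrow> sq_dist X x y = sq_dist X y x"
  using X unfolding is_sqms_def Let_def by blast
lemma sq_tri: "x \<in> sq_carrier X \<Longrightarrow> y \<in> sq_carrier X \<Longrightarrow> z \<in> sq_carrier X \<Longrightarrow>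
    sq_dist X x z \<le> sq_dist X x y + sq_dist X y z"
  using X unfolding is_sqms_def Let_def by blast
lemma sq_map_in: "p \<in> M0 \<Longrightarrow> sq_map X p \<in> sq_carrier X"
  using X unfolding is_sqms_def Let_def by blast
lemma sq_inj: "inj_on (sq_map X) M0"
  using X unfolding is_sqms_def Let_def by blast
lemma sq1a: "i \<in> {0,1} \<Longrightarrow> r \<in> {0..1} \<Longrightarrow> s \<in> {0..1} \<Longrightarrow>
   sq_dist X (sq_map X (i, r)) (sq_map X (i, s)) = \<bar>s - r\<bar>"
  using X unfolding is_sqms_def Let_def by blast
lemma sq1b: "i \<in> {0,1} \<Longrightarrow> r \<in> {0..1} \<Longrightarrow> s \<in> {0..1} \<Longrightarrow>
   sq_dist X (sq_map X (r, i)) (sq_map X (s, i)) = \<bar>s - r\<bar>"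
  using X unfolding is_sqms_def Let_def by blast
lemma sq2: "p \<in> M0 \<Longrightarrow> q \<in> M0 \<Longrightarrow>
   sq_dist X (sq_map X p) (sq_map X q) \<ge> \<bar>fst p - fst q\<bar> + \<bar>snd p - snd q\<bar>"
  using X unfolding is_sqms_def Let_def by blast

end

lemma M0_iff: "(r, s) \<in> M0 \<longleftrightarrow> 0 \<le> r \<and> r \<le> 1 \<and> 0 \<le> s \<and> s \<le> 1 \<and> (r = 0 \<or> r = 1 \<or> s = 0 \<or> s = 1)"
  unfolding M0_def by auto

lemma M0_bounds: "p \<in> M0 \<Longrightarrow> 0 \<le> fst p \<and> fst p \<le> 1 \<and> 0 \<le> snd p \<and> snd p \<le> 1"
  by (cases p) (auto simp: M0_iff)

lemma sq_homD:
  assumes "sq_hom X Y f"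
  shows "x \<in> sq_carrier X \<Longrightarrow> f x \<in> sq_carrier Y"
    and "x \<in> sq_carrier X \<Longrightarrow> y \<in> sq_carrier X \<Longrightarrow> sq_dist Y (f x) (f y) \<le> sq_dist X x y"
    and "p \<in> M0 \<Longrightarrow> f (sq_map X p) = sq_map Y p"
  using assms unfolding sq_hom_def by blast+

fun ccost :: "'a sqms \<Rightarrow> ((nat \<times> nat) \<times> 'a) list \<Rightarrow> real" where
  "ccost X (z # w # zs) = tens_cost X z w + ccost X (w # zs)"
| "ccost X _ = 0"

lemma sum_ccost: "(\<Sum>i<length zs - 1. tens_cost X (zs ! i) (zs ! Suc i)) = ccost X zs"
proof (induction X zs rule: ccost.induct)
  case (1 X z w zs)
  have "(\<Sum>i<length (z # w # zs) - 1. tens_cost X ((z # w # zs) ! i) ((z # w # zs) ! Suc i))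
     = (\<Sum>i<Suc (length (w#zs) - 1). tens_cost X ((z # w # zs) ! i) ((z # w # zs) ! Suc i))" by simp
  also have "\<dots> = tens_cost X z w + (\<Sum>i<length (w#zs) - 1. tens_cost X ((w # zs) ! i) ((w # zs) ! Suc i))"
    by (subst sum.lessThan_Suc_shift) simp
  finally show ?case using 1 by simp
qed auto

definition chains :: "'a sqms \<Rightarrow> ((nat \<times> nat) \<times> 'a) set \<Rightarrow> ((nat \<times> nat) \<times> 'a) set \<Rightarrow> ((nat \<times> nat) \<times> 'a) list set" where
  "chains X P Q = {zs. zs \<noteq> [] \<and> set zs \<subseteq> Mset \<times> sq_carrier X \<and> hd zs \<in> P \<and> last zs \<in> Q}"

lemma tens_dist_alt: "tens_dist X P Q = Inf (ccost X ` chains X P Q)"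
  unfolding tens_dist_def sum_ccost chains_def by (rule arg_cong[where f=Inf]) auto

lemma rel_refl[simp]: "(z, z) \<in> tens_rel X"
  unfolding tens_rel_def by simp

lemma rel_sym: "(z, w) \<in> tens_rel X \<Longrightarrow> (w, z) \<in> tens_rel X"
  using sym_rtrancl[OF sym_Un_converse[of "tens_gen X"]] unfolding sym_def tens_rel_def by blast

lemma rel_trans: "(z, w) \<in> tens_rel X \<Longrightarrow> (w, u) \<in> tens_rel X \<Longrightarrow> (z, u) \<in> tens_rel X"
  unfolding tens_rel_def by (rule rtrancl_trans)

lemma gen_rel: "(z, w) \<in> tens_gen X \<Longrightarrow> (z, w) \<in> tens_rel X"
  unfolding tens_rel_def by auto

lemma mem_pt: "z \<in> tens_pt X m x \<longleftrightarrow> ((m, x), z) \<in> tens_rel X"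
  unfolding tens_pt_def by simp

lemma pt_self: "(m, x) \<in> tens_pt X m x"
  by (simp add: mem_pt)

lemma pt_eq: "((m, x), (n, y)) \<in> tens_rel X \<Longrightarrow> tens_pt X m x = tens_pt X n y"
  unfolding tens_pt_def using rel_sym rel_trans by blast

lemma pt_eq_iff: "tens_pt X m x = tens_pt X n y \<longleftrightarrow> ((m, x), (n, y)) \<in> tens_rel X"
  using pt_eq pt_self mem_pt by metis

lemma pt_mem_eq: "z \<in> tens_pt X m x \<Longrightarrow> tens_pt X m x = tens_pt X (fst z) (snd z)"
  using pt_eq mem_pt by (metis prod.collapse)

lemma in_same_pt: "z \<in> tens_pt X m x \<Longrightarrow> w \<in> tens_pt X m x \<Longrightarrow> (z, w) \<in> tens_rel X"
  using mem_pt rel_sym rel_trans by metis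

lemma cost_rel: "(z, w) \<in> tens_rel X \<Longrightarrow> tens_cost X z w = 0"
  unfolding tens_cost_def by simp

lemma cost_nonneg: "is_sqms X \<Longrightarrow> snd z \<in> sq_carrier X \<Longrightarrow> snd w \<in> sq_carrier X \<Longrightarrow> 0 \<le> tens_cost X z w"
  unfolding tens_cost_def using sq_nonneg by auto

lemma cost_le2: "is_sqms X \<Longrightarrow> snd z \<in> sq_carrier X \<Longrightarrow> snd w \<in> sq_carrier X \<Longrightarrow> tens_cost X z w \<le> 2"
  unfolding tens_cost_def using sq_le2[of X "snd z" "snd w"] by auto

lemma cost_sym: "is_sqms X \<Longrightarrow> snd z \<in> sq_carrier X \<Longrightarrow> snd w \<in> sq_carrier X \<Longrightarrow> tens_cost X z w = tens_cost X w z"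
proof -
  assume a: "is_sqms X" "snd z \<in> sq_carrier X" "snd w \<in> sq_carrier X"
  have r: "(z, w) \<in> tens_rel X \<longleftrightarrow> (w, z) \<in> tens_rel X" using rel_sym by blast
  show ?thesis unfolding tens_cost_def using sq_sym[OF a] r by auto
qed

lemma cost_same: "is_sqms X \<Longrightarrow> snd z \<in> sq_carrier X \<Longrightarrow> snd w \<in> sq_carrier X \<Longrightarrow> fst z = fst w \<Longrightarrow>
   tens_cost X z w \<le> sq_dist X (snd z) (snd w) / 3"
  unfolding tens_cost_def using sq_nonneg[of X "snd z" "snd w"] by auto

lemma ccost_nonneg: "is_sqms X \<Longrightarrow> set zs \<subseteq> Mset \<times> sq_carrier X \<Longrightarrow> 0 \<le> ccost X zs"
  by (induction X zs rule: ccost.induct) (auto intro!: add_nonneg_nonneg cost_nonneg)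

lemma ccost_append: "zs \<noteq> [] \<Longrightarrow> ws \<noteq> [] \<Longrightarrow>
   ccost X (zs @ ws) = ccost X zs + tens_cost X (last zs) (hd ws) + ccost X ws"
proof (induction zs)
  case (Cons z zs)
  show ?case
  proof (cases zs)
    case Nil then show ?thesis using Cons by (cases ws) auto
  next
    case (Cons u us) then show ?thesis using Cons.IH Cons.prems by simp
  qed
qed simp

lemma ccost_rev: "is_sqms X \<Longrightarrow> set zs \<subseteq> Mset \<times> sq_carrier X \<Longrightarrow> ccost X (rev zs) = ccost X zs"
proof (induction X zs rule: ccost.induct)
  case (1 X z w zs)
  have "ccost X (rev (z # w # zs)) = ccost X (rev (w # zs) @ [z])" by simp
  also have "\<dots> = ccost X (rev (w # zs)) + tens_cost X w z + ccost X [z]"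
    by (subst ccost_append) auto
  also have "\<dots> = ccost X (w # zs) + tens_cost X z w"
    using 1 cost_sym[of X w z] by auto
  finally show ?case by simp
qed auto

lemma chains_ne: "(m, x) \<in> Mset \<times> sq_carrier X \<Longrightarrow> (n, y) \<in> Mset \<times> sq_carrier X \<Longrightarrow>
   [(m, x), (n, y)] \<in> chains X (tens_pt X m x) (tens_pt X n y)"
  unfolding chains_def by (auto simp: pt_self)

lemma dist_le_chain: "is_sqms X \<Longrightarrow> zs \<in> chains X P Q \<Longrightarrow> tens_dist X P Q \<le> ccost X zs"
  unfolding tens_dist_alt
  by (rule cInf_lower) (auto simp: bdd_below_def chains_def intro!: exI[of _ 0] ccost_nonneg)

lemma dist_le_cost: "is_sqms X \<Longrightarrow> (m, x) \<in> Mset \<times> sq_carrier X \<Longrightarrow> (n, y) \<in> Mset \<times> sq_carrier X \<Longrightarrow>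
   tens_dist X (tens_pt X m x) (tens_pt X n y) \<le> tens_cost X (m, x) (n, y)"
  using dist_le_chain[OF _ chains_ne, of X m x n y] by simp

lemma dist_nonneg: "is_sqms X \<Longrightarrow> (m, x) \<in> Mset \<times> sq_carrier X \<Longrightarrow> (n, y) \<in> Mset \<times> sq_carrier X \<Longrightarrow>
   0 \<le> tens_dist X (tens_pt X m x) (tens_pt X n y)"
proof -
  assume a: "is_sqms X" "(m, x) \<in> Mset \<times> sq_carrier X" "(n, y) \<in> Mset \<times> sq_carrier X"
  have ne: "ccost X ` chains X (tens_pt X m x) (tens_pt X n y) \<noteq> {}" using chains_ne[OF a(2,3)] by blast
  show ?thesis unfolding tens_dist_alt
    by (rule cInf_greatest[OF ne]) (auto simp: chains_def intro!: ccost_nonneg a(1))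
qed

lemma dist_le2: "is_sqms X \<Longrightarrow> (m, x) \<in> Mset \<times> sq_carrier X \<Longrightarrow> (n, y) \<in> Mset \<times> sq_carrier X \<Longrightarrow>
   tens_dist X (tens_pt X m x) (tens_pt X n y) \<le> 2"
  using dist_le_cost[of X m x n y] cost_le2[of X "(m,x)" "(n,y)"] by force

lemma dist_self: "is_sqms X \<Longrightarrow> (m, x) \<in> Mset \<times> sq_carrier X \<Longrightarrow>
   tens_dist X (tens_pt X m x) (tens_pt X m x) = 0"
  using dist_le_cost[of X m x m x] dist_nonneg[of X m x m x] cost_rel[of "(m,x)" "(m,x)" X] by simp

lemma chain_short:
  assumes step: "\<And>z w. z \<in> Mset \<times> sq_carrier X \<Longrightarrow> w \<in> Mset \<times> sq_carrier X \<Longrightarrow> \<delta> (F z) (F w) \<le> tens_cost X z w"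
    and tri: "\<And>z w u. z \<in> Mset \<times> sq_carrier X \<Longrightarrow> w \<in> Mset \<times> sq_carrier X \<Longrightarrow> u \<in> Mset \<times> sq_carrier X \<Longrightarrow>
         \<delta> (F z) (F u) \<le> \<delta> (F z) (F w) + \<delta> (F w) (F u)"
  shows "zs \<noteq> [] \<Longrightarrow> set zs \<subseteq> Mset \<times> sq_carrier X \<Longrightarrow> \<delta> (F (hd zs)) (F (last zs)) \<le> ccost X zs"
proof (induction zs)
  case (Cons z zs)
  show ?case
  proof (cases zs)
    case Nil
    have "\<delta> (F z) (F z) \<le> \<delta> (F z) (F z) + \<delta> (F z) (F z)" using Cons by (intro tri) auto
    moreover have "\<delta> (F z) (F z) \<le> tens_cost X z z" using Cons by (intro step) auto
    moreover have "tens_cost X z z = 0" by (simp add: cost_rel)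
    ultimately show ?thesis using Nil by simp
  next
    case (Cons w ws)
    note zs = this
    have "\<delta> (F w) (F (last (w # ws))) \<le> ccost X (w # ws)" using Cons.IH Cons.prems zs by auto
    moreover have "\<delta> (F z) (F (last (w # ws))) \<le> \<delta> (F z) (F w) + \<delta> (F w) (F (last (w # ws)))"
      using Cons.prems zs by (intro tri) auto
    moreover have "\<delta> (F z) (F w) \<le> tens_cost X z w" using Cons.prems zs by (intro step) auto
    ultimately show ?thesis using zs by simp
  qed
qed simp

lemma dist_lower:
  assumes step: "\<And>z w. z \<in> Mset \<times> sq_carrier X \<Longrightarrow> w \<in> Mset \<times> sq_carrier X \<Longrightarrow> \<delta> (F z) (F w) \<le> tens_cost X z w"
    and tri: "\<And>z w u. z \<in> Mset \<times> sq_carrier X \<Longrightarrow> w \<in> Mset \<times> sq_carrier X \<Longrightarrow> u \<in> Mset \<times> sq_carrier X \<Longrightarrow>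
         \<delta> (F z) (F u) \<le> \<delta> (F z) (F w) + \<delta> (F w) (F u)"
    and z0: "(m, x) \<in> Mset \<times> sq_carrier X" and w0: "(n, y) \<in> Mset \<times> sq_carrier X"
  shows "\<delta> (F (m, x)) (F (n, y)) \<le> tens_dist X (tens_pt X m x) (tens_pt X n y)"
  unfolding tens_dist_alt
proof (rule cInf_greatest)
  show "ccost X ` chains X (tens_pt X m x) (tens_pt X n y) \<noteq> {}"
    using chains_ne[OF z0 w0] by blast
next
  fix r assume "r \<in> ccost X ` chains X (tens_pt X m x) (tens_pt X n y)"
  then obtain zs where zs: "zs \<in> chains X (tens_pt X m x) (tens_pt X n y)" and r: "r = ccost X zs" by auto
  from zs have ne: "zs \<noteq> []" and sub: "set zs \<subseteq> Mset \<times> sq_carrier X"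
    and h: "hd zs \<in> tens_pt X m x" and l: "last zs \<in> tens_pt X n y" unfolding chains_def by auto
  have hdin: "hd zs \<in> Mset \<times> sq_carrier X" and lin: "last zs \<in> Mset \<times> sq_carrier X"
    using ne sub by auto
  have "\<delta> (F (m, x)) (F (hd zs)) \<le> tens_cost X (m, x) (hd zs)" using z0 hdin by (intro step)
  also have "\<dots> = 0" using h by (simp add: cost_rel mem_pt)
  finally have a: "\<delta> (F (m, x)) (F (hd zs)) \<le> 0" .
  have "\<delta> (F (last zs)) (F (n, y)) \<le> tens_cost X (last zs) (n, y)" using w0 lin by (intro step)
  also have "\<dots> = 0" using l by (simp add: cost_rel mem_pt rel_sym)
  finally have b: "\<delta> (F (last zs)) (F (n, y)) \<le> 0" .
  have c: "\<delta> (F (hd zs)) (F (last zs)) \<le> ccost X zs" using chain_short[of X \<delta> F, OF step tri ne sub] by blast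
  have "\<delta> (F (m, x)) (F (n, y)) \<le> \<delta> (F (m, x)) (F (hd zs)) + \<delta> (F (hd zs)) (F (n, y))"
    using z0 w0 hdin by (intro tri)
  also have "\<delta> (F (hd zs)) (F (n, y)) \<le> \<delta> (F (hd zs)) (F (last zs)) + \<delta> (F (last zs)) (F (n, y))"
    using w0 hdin lin by (intro tri)
  finally show "\<delta> (F (m, x)) (F (n, y)) \<le> r" using a b c r by linarith
qed



definition pos :: "nat \<times> nat \<Rightarrow> real \<times> real \<Rightarrow> real \<times> real" where
  "pos m p = ((real (fst m) + fst p) / 3, (real (snd m) + snd p) / 3)"

lemma Mset_iff: "m \<in> Mset \<longleftrightarrow> fst m \<le> 2 \<and> snd m \<le> 2 \<and> m \<noteq> (1, 1)"
  unfolding Mset_def by (cases m) auto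

lemma rel_char:
  assumes X: "is_sqms X" and r: "(z, w) \<in> tens_rel X"
  shows "z = w \<or> (\<exists>p q. p \<in> M0 \<and> q \<in> M0 \<and> snd z = sq_map X p \<and> snd w = sq_map X q \<and>
            fst z \<in> Mset \<and> fst w \<in> Mset \<and> pos (fst z) p = pos (fst w) q)"
  using r unfolding tens_rel_def
proof (induction rule: rtrancl_induct)
  case base
  then show ?case by simp
next
  case (step y u)
  from step(2) obtain m n p q where g: "m \<in> Mset" "n \<in> Mset" "p \<in> M0" "q \<in> M0"
     "pos m p = pos n q" and yu: "(y = (m, sq_map X p) \<and> u = (n, sq_map X q)) \<or> (u = (m, sq_map X p) \<and> y = (n, sq_map X q))"
    unfolding tens_gen_def pos_def by auto
  from yu obtain p' q' m' n' where yu': "y = (m', sq_map X p')" "u = (n', sq_map X q')" "p' \<in> M0" "q' \<in> M0"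
    "m' \<in> Mset" "n' \<in> Mset" "pos m' p' = pos n' q'"
    using g by metis
  from step(3) show ?case
  proof
    assume "z = y" then show ?thesis using yu' by (intro disjI2 exI[of _ p'] exI[of _ q']) auto
  next
    assume "\<exists>p q. p \<in> M0 \<and> q \<in> M0 \<and> snd z = sq_map X p \<and> snd y = sq_map X q \<and>
            fst z \<in> Mset \<and> fst y \<in> Mset \<and> pos (fst z) p = pos (fst y) q"
    then obtain p1 q1 where h: "p1 \<in> M0" "q1 \<in> M0" "snd z = sq_map X p1" "snd y = sq_map X q1"
       "fst z \<in> Mset" "pos (fst z) p1 = pos (fst y) q1" by blast
    have "q1 = p'" using inj_onD[OF sq_inj[OF X]] h yu' by auto
    then show ?thesis using h yu' by (intro disjI2 exI[of _ p1] exI[of _ q']) auto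
  qed
qed

lemma gen_intro:
  assumes "m \<in> Mset" "n \<in> Mset" "adjacent m n" "p \<in> M0" "q \<in> M0" "pos m p = pos n q"
  shows "((m, sq_map X p), (n, sq_map X q)) \<in> tens_rel X"
proof -
  have "((m, sq_map X p), (n, sq_map X q)) \<in> tens_gen X"
    using assms unfolding tens_gen_def pos_def by blast
  then show ?thesis by (rule gen_rel)
qed

lemma nat_diff1:
  fixes a b :: nat and u v :: real
  assumes "real a + u = real b + v" "0 \<le> u" "u \<le> 1" "0 \<le> v" "v \<le> 1"
  shows "a = b \<or> a = b + 1 \<or> b = a + 1"
proof -
  have "real a \<le> real b + 1" "real b \<le> real a + 1" using assms by linarith+
  then have "a \<le> b + 1" "b \<le> a + 1" by linarith+
  then show ?thesis by linarith
qed

lemma pos_rel: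
  assumes m: "m \<in> Mset" and n: "n \<in> Mset" and p: "p \<in> M0" and q: "q \<in> M0" and e: "pos m p = pos n q"
  shows "((m, sq_map X p), (n, sq_map X q)) \<in> tens_rel X"
proof -
  obtain m1 m2 where mm: "m = (m1, m2)" by (cases m)
  obtain n1 n2 where nn: "n = (n1, n2)" by (cases n)
  obtain p1 p2 where pp: "p = (p1, p2)" by (cases p)
  obtain q1 q2 where qq: "q = (q1, q2)" by (cases q)
  have e1: "real m1 + p1 = real n1 + q1" and e2: "real m2 + p2 = real n2 + q2"
    using e unfolding pos_def mm nn pp qq by auto
  have bp: "0 \<le> p1" "p1 \<le> 1" "0 \<le> p2" "p2 \<le> 1" using M0_bounds[OF p] pp by auto
  have bq: "0 \<le> q1" "q1 \<le> 1" "0 \<le> q2" "q2 \<le> 1" using M0_bounds[OF q] qq by auto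
  have c1: "m1 = n1 \<or> m1 = n1 + 1 \<or> n1 = m1 + 1" using nat_diff1[OF e1] bp bq by auto
  have c2: "m2 = n2 \<or> m2 = n2 + 1 \<or> n2 = m2 + 1" using nat_diff1[OF e2] bp bq by auto
  show ?thesis
  proof (cases "m1 = n1 \<and> m2 = n2")
    case True
    then have "p = q" using e1 e2 pp qq by auto
    then show ?thesis using True mm nn by simp
  next
    case F: False
    show ?thesis
    proof (cases "adjacent m n")
      case True
      then show ?thesis by (rule gen_intro[OF m n _ p q e])
    next
      case na: False
      have d1: "m1 \<noteq> n1" and d2: "m2 \<noteq> n2" using F na c1 c2 unfolding adjacent_def mm nn by auto
      have p1c: "p1 = 0 \<or> p1 = 1" and q1c: "q1 = 0 \<or> q1 = 1"
        using d1 c1 e1 bp bq by (auto simp: of_nat_add) 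
      have p2c: "p2 = 0 \<or> p2 = 1" and q2c: "q2 = 0 \<or> q2 = 1"
        using d2 c2 e2 bp bq by (auto simp: of_nat_add)
      have mb: "m1 \<le> 2" "m2 \<le> 2" "n1 \<le> 2" "n2 \<le> 2" using m n mm nn by (auto simp: Mset_iff)
      show ?thesis
      proof (cases "(m1, n2) = (1, 1)")
        case False
        let ?w = "(m1, n2)" and ?r = "(p1, q2)"
        have w: "?w \<in> Mset" using False mb by (auto simp: Mset_iff)
        have r: "?r \<in> M0" using p1c q2c bq bp by (auto simp: M0_iff)
        have a1: "((m, sq_map X p), (?w, sq_map X ?r)) \<in> tens_rel X"
          by (rule gen_intro[OF m w _ p r]) (use c2 d2 e2 pp mm in \<open>auto simp: adjacent_def pos_def\<close>)
        have a2: "((?w, sq_map X ?r), (n, sq_map X q)) \<in> tens_rel X"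
          by (rule gen_intro[OF w n _ r q]) (use c1 d1 e1 qq nn in \<open>auto simp: adjacent_def pos_def\<close>)
        show ?thesis using rel_trans[OF a1 a2] .
      next
        case True
        let ?w = "(n1, m2)" and ?r = "(q1, p2)"
        have "(n1, m2) \<noteq> (1, 1)" using True d1 by auto
        then have w: "?w \<in> Mset" using mb by (auto simp: Mset_iff)
        have r: "?r \<in> M0" using q1c p2c bq bp by (auto simp: M0_iff)
        have a1: "((m, sq_map X p), (?w, sq_map X ?r)) \<in> tens_rel X"
          by (rule gen_intro[OF m w _ p r]) (use c1 d1 e1 pp mm in \<open>auto simp: adjacent_def pos_def\<close>)
        have a2: "((?w, sq_map X ?r), (n, sq_map X q)) \<in> tens_rel X"
          by (rule gen_intro[OF w n _ r q]) (use c2 d2 e2 qq nn in \<open>auto simp: adjacent_def pos_def\<close>)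
        show ?thesis using rel_trans[OF a1 a2] .
      qed
    qed
  qed
qed



lemma dist_sym_le:
  assumes X: "is_sqms X" and a: "(m, x) \<in> Mset \<times> sq_carrier X" and b: "(n, y) \<in> Mset \<times> sq_carrier X"
  shows "tens_dist X (tens_pt X m x) (tens_pt X n y) \<le> tens_dist X (tens_pt X n y) (tens_pt X m x)"
proof -
  have ne: "ccost X ` chains X (tens_pt X n y) (tens_pt X m x) \<noteq> {}" using chains_ne[OF b a] by blast
  show ?thesis unfolding tens_dist_alt[of X "tens_pt X n y"]
  proof (rule cInf_greatest[OF ne])
    fix r assume "r \<in> ccost X ` chains X (tens_pt X n y) (tens_pt X m x)"
    then obtain zs where zs: "zs \<in> chains X (tens_pt X n y) (tens_pt X m x)" and r: "r = ccost X zs" by auto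
    have "rev zs \<in> chains X (tens_pt X m x) (tens_pt X n y)"
      using zs unfolding chains_def by (auto simp: hd_rev last_rev)
    then have "tens_dist X (tens_pt X m x) (tens_pt X n y) \<le> ccost X (rev zs)" by (rule dist_le_chain[OF X])
    also have "\<dots> = ccost X zs" using zs X unfolding chains_def by (intro ccost_rev) auto
    finally show "tens_dist X (tens_pt X m x) (tens_pt X n y) \<le> r" using r by simp
  qed
qed

lemma dist_sym:
  assumes X: "is_sqms X" and a: "(m, x) \<in> Mset \<times> sq_carrier X" and b: "(n, y) \<in> Mset \<times> sq_carrier X"
  shows "tens_dist X (tens_pt X m x) (tens_pt X n y) = tens_dist X (tens_pt X n y) (tens_pt X m x)"
  using dist_sym_le[OF X a b] dist_sym_le[OF X b a] by simp

lemma dist_tri: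
  assumes X: "is_sqms X" and a: "(m, x) \<in> Mset \<times> sq_carrier X" and b: "(n, y) \<in> Mset \<times> sq_carrier X"
    and c: "(k, u) \<in> Mset \<times> sq_carrier X"
  shows "tens_dist X (tens_pt X m x) (tens_pt X k u)
     \<le> tens_dist X (tens_pt X m x) (tens_pt X n y) + tens_dist X (tens_pt X n y) (tens_pt X k u)"
proof -
  let ?P = "tens_pt X m x" and ?Q = "tens_pt X n y" and ?R = "tens_pt X k u"
  have key: "tens_dist X ?P ?R \<le> ccost X zs + ccost X ws"
    if zs: "zs \<in> chains X ?P ?Q" and ws: "ws \<in> chains X ?Q ?R" for zs ws
  proof -
    have "zs @ ws \<in> chains X ?P ?R" using zs ws unfolding chains_def by auto
    then have "tens_dist X ?P ?R \<le> ccost X (zs @ ws)" by (rule dist_le_chain[OF X])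
    also have "\<dots> = ccost X zs + tens_cost X (last zs) (hd ws) + ccost X ws"
      using zs ws unfolding chains_def by (intro ccost_append) auto
    also have "tens_cost X (last zs) (hd ws) = 0"
      using zs ws unfolding chains_def by (intro cost_rel in_same_pt[of _ X n y]) auto
    finally show ?thesis by simp
  qed
  have ne1: "ccost X ` chains X ?P ?Q \<noteq> {}" using chains_ne[OF a b] by blast
  have ne2: "ccost X ` chains X ?Q ?R \<noteq> {}" using chains_ne[OF b c] by blast
  have "tens_dist X ?P ?R - ccost X ws \<le> tens_dist X ?P ?Q" if ws: "ws \<in> chains X ?Q ?R" for ws
    unfolding tens_dist_alt[of X ?P ?Q]
    by (rule cInf_greatest[OF ne1]) (use key ws in force)
  then have "tens_dist X ?P ?R - tens_dist X ?P ?Q \<le> tens_dist X ?Q ?R"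
    unfolding tens_dist_alt[of X ?Q ?R]
    by (intro cInf_greatest[OF ne2]) force
  then show ?thesis by simp
qed

section \<open>The square map of the tensor\<close>

definition valid :: "nat \<times> nat \<Rightarrow> real \<times> real \<Rightarrow> bool" where
  "valid m p \<longleftrightarrow> m \<in> Mset \<and> 0 \<le> 3 * fst p - real (fst m) \<and> 3 * fst p - real (fst m) \<le> 1
                          \<and> 0 \<le> 3 * snd p - real (snd m) \<and> 3 * snd p - real (snd m) \<le> 1"

definition loc :: "nat \<times> nat \<Rightarrow> real \<times> real \<Rightarrow> real \<times> real" where
  "loc m p = (3 * fst p - real (fst m), 3 * snd p - real (snd m))"

definition msel :: "real \<times> real \<Rightarrow> nat \<times> nat" where
  "msel p = (SOME m. valid m p)"

lemma tens_sq_eq: "tens_sq X p = tens_pt X (msel p) (sq_map X (loc (msel p) p))"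
  unfolding tens_sq_def msel_def valid_def loc_def Let_def by simp

definition cell :: "real \<Rightarrow> nat" where
  "cell t = (if t \<le> 1/3 then 0 else if t \<le> 2/3 then 1 else 2)"

lemma valid_ex: "p \<in> M0 \<Longrightarrow> valid (cell (fst p), cell (snd p)) p"
  unfolding valid_def cell_def Mset_iff by (cases p) (auto simp: M0_iff)

lemma valid_msel: "p \<in> M0 \<Longrightarrow> valid (msel p) p"
  unfolding msel_def using valid_ex by (rule someI)

lemma valid_loc: assumes "p \<in> M0" "valid m p" shows "loc m p \<in> M0"
proof -
  obtain p1 p2 where pp: "p = (p1, p2)" by (cases p)
  obtain m1 m2 where mm: "m = (m1, m2)" by (cases m)
  have b: "m1 \<le> 2" "m2 \<le> 2" using assms(2) mm unfolding valid_def Mset_iff by auto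
  have v: "0 \<le> 3 * p1 - real m1" "3 * p1 - real m1 \<le> 1" "0 \<le> 3 * p2 - real m2" "3 * p2 - real m2 \<le> 1"
    using assms(2) unfolding valid_def pp mm by auto
  have "p1 = 0 \<or> p1 = 1 \<or> p2 = 0 \<or> p2 = 1" using assms(1) pp by (auto simp: M0_iff)
  then have "3 * p1 - real m1 = 0 \<or> 3 * p1 - real m1 = 1 \<or> 3 * p2 - real m2 = 0 \<or> 3 * p2 - real m2 = 1"
  proof (elim disjE)
    assume "p1 = 0" then have "real m1 = 0" using v by linarith
    then show ?thesis using \<open>p1 = 0\<close> by simp
  next
    assume "p1 = 1" then have "real m1 \<ge> 2" using v by linarith
    then have "real m1 = 2" using b by linarith
    then show ?thesis using \<open>p1 = 1\<close> by simp
  next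
    assume "p2 = 0" then have "real m2 = 0" using v by linarith
    then show ?thesis using \<open>p2 = 0\<close> by simp
  next
    assume "p2 = 1" then have "real m2 \<ge> 2" using v by linarith
    then have "real m2 = 2" using b by linarith
    then show ?thesis using \<open>p2 = 1\<close> by simp
  qed
  then show ?thesis using v unfolding loc_def pp mm by (auto simp: M0_iff)
qed

lemma pos_loc: "pos m (loc m p) = p"
  unfolding pos_def loc_def by (cases p) auto

lemma valid_Mset: "valid m p \<Longrightarrow> m \<in> Mset"
  unfolding valid_def by simp

lemma tens_sq_any:
  assumes "p \<in> M0" "valid m p"
  shows "tens_sq X p = tens_pt X m (sq_map X (loc m p))"
  unfolding tens_sq_eq
proof (rule pt_eq, rule pos_rel)
  have v: "valid (msel p) p" using valid_msel[OF assms(1)] .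
  show "msel p \<in> Mset" using valid_Mset[OF v] .
  show "m \<in> Mset" using valid_Mset[OF assms(2)] .
  show "loc (msel p) p \<in> M0" using valid_loc[OF assms(1) v] .
  show "loc m p \<in> M0" using valid_loc[OF assms] .
  show "pos (msel p) (loc (msel p) p) = pos m (loc m p)" by (simp add: pos_loc)
qed

lemma tens_sq_in:
  assumes X: "is_sqms X" and p: "p \<in> M0"
  shows "(msel p, sq_map X (loc (msel p) p)) \<in> Mset \<times> sq_carrier X"
  using valid_msel[OF p] valid_loc[OF p] valid_Mset sq_map_in[OF X] by auto



section \<open>McShane-type functions\<close>

definition mcs :: "'a sqms \<Rightarrow> real \<Rightarrow> real \<Rightarrow> 'a \<Rightarrow> real" where
  "mcs X \<sigma> \<tau> z = Inf ((\<lambda>p. sq_dist X z (sq_map X p) + \<sigma> * fst p + \<tau> * snd p) ` M0)"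

lemma M0_ne: "(0, 0) \<in> M0" by (simp add: M0_iff)

context
  fixes X :: "'a sqms" and \<sigma> \<tau> :: real
  assumes X: "is_sqms X" and sg: "\<sigma> \<in> {-1, 1}" "\<tau> \<in> {-1, 1}"
begin

lemma mcs_bdd: "z \<in> sq_carrier X \<Longrightarrow> bdd_below ((\<lambda>p. sq_dist X z (sq_map X p) + \<sigma> * fst p + \<tau> * snd p) ` M0)"
proof -
  assume z: "z \<in> sq_carrier X"
  have "-2 \<le> sq_dist X z (sq_map X p) + \<sigma> * fst p + \<tau> * snd p" if p: "p \<in> M0" for p
  proof -
    have "0 \<le> sq_dist X z (sq_map X p)" using sq_nonneg[OF X z sq_map_in[OF X p]] .
    moreover have "-1 \<le> \<sigma> * fst p" "-1 \<le> \<tau> * snd p" using M0_bounds[OF p] sg by auto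
    ultimately show ?thesis by linarith
  qed
  then show ?thesis unfolding bdd_below_def by blast
qed

lemma mcs_le: "z \<in> sq_carrier X \<Longrightarrow> p \<in> M0 \<Longrightarrow> mcs X \<sigma> \<tau> z \<le> sq_dist X z (sq_map X p) + \<sigma> * fst p + \<tau> * snd p"
  unfolding mcs_def by (rule cInf_lower) (auto intro: mcs_bdd)

lemma mcs_ge: "(\<And>p. p \<in> M0 \<Longrightarrow> c \<le> sq_dist X z (sq_map X p) + \<sigma> * fst p + \<tau> * snd p) \<Longrightarrow> c \<le> mcs X \<sigma> \<tau> z"
  unfolding mcs_def using M0_ne by (intro cInf_greatest) auto

lemma mcs_lip: assumes z: "z \<in> sq_carrier X" and w: "w \<in> sq_carrier X"
  shows "mcs X \<sigma> \<tau> z \<le> sq_dist X z w + mcs X \<sigma> \<tau> w"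
proof -
  have "mcs X \<sigma> \<tau> z - sq_dist X z w \<le> mcs X \<sigma> \<tau> w"
  proof (rule mcs_ge)
    fix p assume p: "p \<in> M0"
    have "mcs X \<sigma> \<tau> z \<le> sq_dist X z (sq_map X p) + \<sigma> * fst p + \<tau> * snd p" by (rule mcs_le[OF z p])
    moreover have "sq_dist X z (sq_map X p) \<le> sq_dist X z w + sq_dist X w (sq_map X p)"
      by (rule sq_tri[OF X z w sq_map_in[OF X p]])
    ultimately show "mcs X \<sigma> \<tau> z - sq_dist X z w \<le> sq_dist X w (sq_map X p) + \<sigma> * fst p + \<tau> * snd p" by linarith
  qed
  then show ?thesis by linarith
qed

lemma mcs_S: assumes q: "q \<in> M0" shows "mcs X \<sigma> \<tau> (sq_map X q) = \<sigma> * fst q + \<tau> * snd q"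
proof (rule antisym)
  show "mcs X \<sigma> \<tau> (sq_map X q) \<le> \<sigma> * fst q + \<tau> * snd q"
    using mcs_le[OF sq_map_in[OF X q] q] sq_zero[OF X sq_map_in[OF X q]] by simp
  show "\<sigma> * fst q + \<tau> * snd q \<le> mcs X \<sigma> \<tau> (sq_map X q)"
  proof (rule mcs_ge)
    fix p assume p: "p \<in> M0"
    have "\<bar>fst q - fst p\<bar> + \<bar>snd q - snd p\<bar> \<le> sq_dist X (sq_map X q) (sq_map X p)" by (rule sq2[OF X q p])
    moreover have "\<sigma> * (fst q - fst p) \<le> \<bar>fst q - fst p\<bar>" "\<tau> * (snd q - snd p) \<le> \<bar>snd q - snd p\<bar>"
      using sg by auto
    ultimately show "\<sigma> * fst q + \<tau> * snd q \<le> sq_dist X (sq_map X q) (sq_map X p) + \<sigma> * fst p + \<tau> * snd p"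
      by (simp add: algebra_simps)
  qed
qed

end

definition clampv :: "real \<Rightarrow> real \<Rightarrow> real" where
  "clampv l t = max l (min (l + 2) t)"

definition lo :: "real \<Rightarrow> real \<Rightarrow> real" where
  "lo \<sigma> \<tau> = min 0 \<sigma> + min 0 \<tau>"

definition Phi :: "'a sqms \<Rightarrow> real \<Rightarrow> real \<Rightarrow> (nat \<times> nat) \<times> 'a \<Rightarrow> real" where
  "Phi X \<sigma> \<tau> z = (\<sigma> * real (fst (fst z)) + \<tau> * real (snd (fst z)) + clampv (lo \<sigma> \<tau>) (mcs X \<sigma> \<tau> (snd z))) / 3"

lemma clampv_lip: "\<bar>clampv l a - clampv l b\<bar> \<le> \<bar>a - b\<bar>"
  unfolding clampv_def by (auto simp: max_def min_def)

lemma clampv_id: "l \<le> t \<Longrightarrow> t \<le> l + 2 \<Longrightarrow> clampv l t = t"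
  unfolding clampv_def by auto

lemma clampv_range: "l \<le> clampv l t" "clampv l t \<le> l + 2"
  unfolding clampv_def by auto

context
  fixes X :: "'a sqms" and \<sigma> \<tau> :: real
  assumes X: "is_sqms X" and sg: "\<sigma> \<in> {-1, 1}" "\<tau> \<in> {-1, 1}"
begin

lemma Phi_S: assumes q: "q \<in> M0"
  shows "Phi X \<sigma> \<tau> (m, sq_map X q) = \<sigma> * fst (pos m q) + \<tau> * snd (pos m q)"
proof -
  have b: "lo \<sigma> \<tau> \<le> \<sigma> * fst q + \<tau> * snd q" "\<sigma> * fst q + \<tau> * snd q \<le> lo \<sigma> \<tau> + 2"
    using M0_bounds[OF q] sg unfolding lo_def by auto
  show ?thesis unfolding Phi_def pos_def
    using mcs_S[OF X sg q] clampv_id[OF b] by (simp add: algebra_simps add_divide_distrib)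
qed

lemma Phi_range: assumes z: "z \<in> Mset \<times> sq_carrier X"
  shows "lo \<sigma> \<tau> \<le> Phi X \<sigma> \<tau> z \<and> Phi X \<sigma> \<tau> z \<le> lo \<sigma> \<tau> + 2"
proof -
  have b: "fst (fst z) \<le> 2" "snd (fst z) \<le> 2" using z by (auto simp: Mset_iff)
  then have b': "real (fst (fst z)) \<le> 2" "real (snd (fst z)) \<le> 2" by auto
  have c: "lo \<sigma> \<tau> \<le> clampv (lo \<sigma> \<tau>) (mcs X \<sigma> \<tau> (snd z))" "clampv (lo \<sigma> \<tau>) (mcs X \<sigma> \<tau> (snd z)) \<le> lo \<sigma> \<tau> + 2"
    by (rule clampv_range)+
  show ?thesis using sg b' c unfolding Phi_def lo_def by auto
qed

lemma Phi_step: assumes z: "z \<in> Mset \<times> sq_carrier X" and w: "w \<in> Mset \<times> sq_carrier X"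
  shows "\<bar>Phi X \<sigma> \<tau> z - Phi X \<sigma> \<tau> w\<bar> \<le> tens_cost X z w"
proof (cases "(z, w) \<in> tens_rel X")
  case True
  from rel_char[OF X True] show ?thesis
  proof
    assume "z = w" then show ?thesis by (simp add: cost_rel)
  next
    assume "\<exists>p q. p \<in> M0 \<and> q \<in> M0 \<and> snd z = sq_map X p \<and> snd w = sq_map X q \<and>
            fst z \<in> Mset \<and> fst w \<in> Mset \<and> pos (fst z) p = pos (fst w) q"
    then obtain p q where h: "p \<in> M0" "q \<in> M0" "snd z = sq_map X p" "snd w = sq_map X q"
      "pos (fst z) p = pos (fst w) q" by blast
    have "Phi X \<sigma> \<tau> z = Phi X \<sigma> \<tau> w"
      using Phi_S[OF h(1), of "fst z"] Phi_S[OF h(2), of "fst w"] h(3,4,5)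
      by (metis prod.collapse)
    then show ?thesis by (simp add: cost_rel True)
  qed
next
  case nr: False
  show ?thesis
  proof (cases "fst z = fst w")
    case True
    have zc: "snd z \<in> sq_carrier X" and wc: "snd w \<in> sq_carrier X" using z w by auto
    have "\<bar>mcs X \<sigma> \<tau> (snd z) - mcs X \<sigma> \<tau> (snd w)\<bar> \<le> sq_dist X (snd z) (snd w)"
      using mcs_lip[OF X sg zc wc] mcs_lip[OF X sg wc zc] sq_sym[OF X zc wc] by linarith
    then have "\<bar>clampv (lo \<sigma> \<tau>) (mcs X \<sigma> \<tau> (snd z)) - clampv (lo \<sigma> \<tau>) (mcs X \<sigma> \<tau> (snd w))\<bar> \<le> sq_dist X (snd z) (snd w)"
      using clampv_lip order_trans by blast
    moreover have "tens_cost X z w = sq_dist X (snd z) (snd w) / 3" using nr True unfolding tens_cost_def by simp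
    ultimately show ?thesis unfolding Phi_def using True by (simp add: diff_divide_distrib[symmetric])
  next
    case False
    have "tens_cost X z w = 2" using nr False unfolding tens_cost_def by simp
    then show ?thesis using Phi_range[OF z] Phi_range[OF w] by linarith
  qed
qed

lemma Phi_lower:
  assumes a: "(m, x) \<in> Mset \<times> sq_carrier X" and b: "(n, y) \<in> Mset \<times> sq_carrier X"
  shows "\<bar>Phi X \<sigma> \<tau> (m, x) - Phi X \<sigma> \<tau> (n, y)\<bar> \<le> tens_dist X (tens_pt X m x) (tens_pt X n y)"
  by (rule dist_lower[where \<delta>="\<lambda>a b. \<bar>a - b\<bar>" and F="Phi X \<sigma> \<tau>", OF Phi_step _ a b]) auto

end

lemma sq2_tens:
  assumes X: "is_sqms X" and p: "p \<in> M0" and q: "q \<in> M0"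
  shows "\<bar>fst p - fst q\<bar> + \<bar>snd p - snd q\<bar> \<le> tens_dist X (tens_sq X p) (tens_sq X q)"
proof -
  define \<sigma> where "\<sigma> = (if fst q \<le> fst p then 1 else -1::real)"
  define \<tau> where "\<tau> = (if snd q \<le> snd p then 1 else -1::real)"
  have sg: "\<sigma> \<in> {-1, 1}" "\<tau> \<in> {-1, 1}" unfolding \<sigma>_def \<tau>_def by auto
  have e: "\<bar>fst p - fst q\<bar> + \<bar>snd p - snd q\<bar> = \<bar>(\<sigma> * fst p + \<tau> * snd p) - (\<sigma> * fst q + \<tau> * snd q)\<bar>"
    unfolding \<sigma>_def \<tau>_def by auto
  have pp: "Phi X \<sigma> \<tau> (msel p, sq_map X (loc (msel p) p)) = \<sigma> * fst p + \<tau> * snd p"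
    using Phi_S[OF X sg valid_loc[OF p valid_msel[OF p]]] by (simp add: pos_loc)
  have qq: "Phi X \<sigma> \<tau> (msel q, sq_map X (loc (msel q) q)) = \<sigma> * fst q + \<tau> * snd q"
    using Phi_S[OF X sg valid_loc[OF q valid_msel[OF q]]] by (simp add: pos_loc)
  show ?thesis unfolding tens_sq_eq e
    using Phi_lower[OF X sg tens_sq_in[OF X p] tens_sq_in[OF X q]] pp qq by simp
qed



lemma lip_isCont:
  fixes g :: "real \<Rightarrow> real"
  assumes "\<And>s t. \<bar>g s - g t\<bar> \<le> \<bar>s - t\<bar>"
  shows "isCont g t"
  unfolding isCont_def LIM_eq
proof (intro allI impI)
  fix r :: real assume r: "0 < r"
  show "\<exists>s>0. \<forall>x. x \<noteq> t \<and> norm (x - t) < s \<longrightarrow> norm (g x - g t) < r"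
    using r assms by (intro exI[of _ r]) (auto intro: le_less_trans)
qed

lemma edge_min:
  fixes X :: "'a sqms" and e :: "real \<Rightarrow> real \<times> real"
  assumes X: "is_sqms X" and x: "x \<in> sq_carrier X" and nx: "x \<notin> sq_map X ` M0"
    and eM: "\<And>t. t \<in> {0..1} \<Longrightarrow> e t \<in> M0"
    and ed: "\<And>s t. s \<in> {0..1} \<Longrightarrow> t \<in> {0..1} \<Longrightarrow> sq_dist X (sq_map X (e s)) (sq_map X (e t)) = \<bar>s - t\<bar>"
  shows "\<exists>\<delta>>0. \<forall>t\<in>{0..1}. \<delta> \<le> sq_dist X x (sq_map X (e t))"
proof -
  define c where "c t = max 0 (min 1 t)" for t :: real
  have c01: "c t \<in> {0..1}" for t unfolding c_def by auto
  have clip: "\<bar>c s - c t\<bar> \<le> \<bar>s - t\<bar>" for s t unfolding c_def by (auto simp: max_def min_def)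
  define g where "g t = sq_dist X x (sq_map X (e (c t)))" for t
  have inC: "sq_map X (e (c t)) \<in> sq_carrier X" for t using sq_map_in[OF X eM[OF c01]] .
  have glip: "\<bar>g s - g t\<bar> \<le> \<bar>s - t\<bar>" for s t
  proof -
    have "g s \<le> g t + sq_dist X (sq_map X (e (c t))) (sq_map X (e (c s)))"
      unfolding g_def by (rule sq_tri[OF X x inC inC])
    moreover have "g t \<le> g s + sq_dist X (sq_map X (e (c s))) (sq_map X (e (c t)))"
      unfolding g_def by (rule sq_tri[OF X x inC inC])
    ultimately have "\<bar>g s - g t\<bar> \<le> \<bar>c s - c t\<bar>" using ed[OF c01 c01, of s t] ed[OF c01 c01, of t s] by linarith
    then show ?thesis using clip[of s t] by linarith
  qed
  have cont: "\<forall>t. 0 \<le> t \<and> t \<le> 1 \<longrightarrow> isCont g t" using lip_isCont[OF glip] by blast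
  obtain M where M: "\<forall>t. 0 \<le> t \<and> t \<le> 1 \<longrightarrow> M \<le> g t" and t0: "\<exists>t. 0 \<le> t \<and> t \<le> 1 \<and> g t = M"
    using isCont_eq_Lb[OF _ cont] by auto
  from t0 obtain t where t: "0 \<le> t" "t \<le> 1" "g t = M" by blast
  have "x \<noteq> sq_map X (e (c t))" using nx eM[OF c01] by blast
  then have "sq_dist X x (sq_map X (e (c t))) \<noteq> 0" using sq_zero_iff[OF X x inC[of t]] by blast
  then have "M > 0" using t(3) sq_nonneg[OF X x inC[of t]] unfolding g_def by linarith
  moreover have "\<forall>s\<in>{0..1}. M \<le> sq_dist X x (sq_map X (e s))"
  proof
    fix s :: real assume s: "s \<in> {0..1}"
    then have "c s = s" unfolding c_def by auto
    then show "M \<le> sq_dist X x (sq_map X (e s))" using M s unfolding g_def by force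
  qed
  ultimately show ?thesis by blast
qed

lemma away:
  assumes X: "is_sqms X" and x: "x \<in> sq_carrier X" and nx: "x \<notin> sq_map X ` M0"
  shows "\<exists>\<delta>>0. \<forall>p\<in>M0. \<delta> \<le> sq_dist X x (sq_map X p)"
proof -
  have ei: "\<exists>\<delta>>0. \<forall>t\<in>{0..1}. \<delta> \<le> sq_dist X x (sq_map X (i, t))" if i: "i \<in> {0, 1}" for i :: real
    by (rule edge_min[OF X x nx]) (use i sq1a[OF X i] in \<open>auto simp: M0_iff abs_minus_commute\<close>)
  have ej: "\<exists>\<delta>>0. \<forall>t\<in>{0..1}. \<delta> \<le> sq_dist X x (sq_map X (t, i))" if i: "i \<in> {0, 1}" for i :: real
    by (rule edge_min[OF X x nx]) (use i sq1b[OF X i] in \<open>auto simp: M0_iff abs_minus_commute\<close>)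
  obtain d1 where d1: "d1 > 0" "\<forall>t\<in>{0..1}. d1 \<le> sq_dist X x (sq_map X (0, t))" using ei[of 0] by auto
  obtain d2 where d2: "d2 > 0" "\<forall>t\<in>{0..1}. d2 \<le> sq_dist X x (sq_map X (1, t))" using ei[of 1] by auto
  obtain d3 where d3: "d3 > 0" "\<forall>t\<in>{0..1}. d3 \<le> sq_dist X x (sq_map X (t, 0))" using ej[of 0] by auto
  obtain d4 where d4: "d4 > 0" "\<forall>t\<in>{0..1}. d4 \<le> sq_dist X x (sq_map X (t, 1))" using ej[of 1] by auto
  show ?thesis
  proof (intro exI[of _ "min (min d1 d2) (min d3 d4)"] conjI ballI)
    show "0 < min (min d1 d2) (min d3 d4)" using d1 d2 d3 d4 by auto
  next
    fix p assume p: "p \<in> M0"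
    obtain p1 p2 where pp: "p = (p1, p2)" by (cases p)
    have b: "p1 \<in> {0..1}" "p2 \<in> {0..1}" and c: "p1 = 0 \<or> p1 = 1 \<or> p2 = 0 \<or> p2 = 1"
      using p pp by (auto simp: M0_iff)
    from c show "min (min d1 d2) (min d3 d4) \<le> sq_dist X x (sq_map X p)"
      using d1(2) d2(2) d3(2) d4(2) b pp by (elim disjE) force+
  qed
qed

definition Psi :: "'a sqms \<Rightarrow> 'a \<Rightarrow> real \<Rightarrow> nat \<times> nat \<Rightarrow> (nat \<times> nat) \<times> 'a \<Rightarrow> real" where
  "Psi X x \<delta> m z = (if fst z = m then max (\<delta> / 3 - sq_dist X x (snd z) / 3) 0 else 0)"

lemma Psi_step:
  assumes X: "is_sqms X" and x: "x \<in> sq_carrier X" and d: "\<forall>p\<in>M0. \<delta> \<le> sq_dist X x (sq_map X p)"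
    and dp: "0 < \<delta>" and z: "z \<in> Mset \<times> sq_carrier X" and w: "w \<in> Mset \<times> sq_carrier X"
  shows "\<bar>Psi X x \<delta> m z - Psi X x \<delta> m w\<bar> \<le> tens_cost X z w"
proof -
  have d2: "\<delta> \<le> 2" using d M0_ne sq_le2[OF X x sq_map_in[OF X M0_ne]] by force
  have rng: "0 \<le> Psi X x \<delta> m u \<and> Psi X x \<delta> m u \<le> \<delta> / 3" if u: "u \<in> Mset \<times> sq_carrier X" for u
    using sq_nonneg[OF X x, of "snd u"] u dp unfolding Psi_def by (auto simp: max_def)
  show ?thesis
  proof (cases "(z, w) \<in> tens_rel X")
    case True
    from rel_char[OF X True] show ?thesis
    proof
      assume "z = w" then show ?thesis by (simp add: cost_rel)
    next
      assume "\<exists>p q. p \<in> M0 \<and> q \<in> M0 \<and> snd z = sq_map X p \<and> snd w = sq_map X q \<and>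
            fst z \<in> Mset \<and> fst w \<in> Mset \<and> pos (fst z) p = pos (fst w) q"
      then obtain p q where h: "p \<in> M0" "q \<in> M0" "snd z = sq_map X p" "snd w = sq_map X q" by blast
      have "Psi X x \<delta> m z = 0" "Psi X x \<delta> m w = 0" using d h unfolding Psi_def by force+
      then show ?thesis by (simp add: cost_rel True)
    qed
  next
    case nr: False
    show ?thesis
    proof (cases "fst z = fst w")
      case True
      have zc: "snd z \<in> sq_carrier X" and wc: "snd w \<in> sq_carrier X" using z w by auto
      have t1: "sq_dist X x (snd z) \<le> sq_dist X x (snd w) + sq_dist X (snd w) (snd z)" by (rule sq_tri[OF X x wc zc])
      have t2: "sq_dist X x (snd w) \<le> sq_dist X x (snd z) + sq_dist X (snd z) (snd w)" by (rule sq_tri[OF X x zc wc])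
      have sy: "sq_dist X (snd w) (snd z) = sq_dist X (snd z) (snd w)" by (rule sq_sym[OF X wc zc])
      have "tens_cost X z w = sq_dist X (snd z) (snd w) / 3" using nr True unfolding tens_cost_def by simp
      then show ?thesis unfolding Psi_def using True t1 t2 sy by (auto simp: max_def)
    next
      case False
      have "tens_cost X z w = 2" using nr False unfolding tens_cost_def by simp
      then show ?thesis using rng[OF z] rng[OF w] d2 by linarith
    qed
  qed
qed

lemma dist_pos_nonS:
  assumes X: "is_sqms X" and a: "(m, x) \<in> Mset \<times> sq_carrier X" and b: "(n, y) \<in> Mset \<times> sq_carrier X"
    and nx: "x \<notin> sq_map X ` M0" and z: "tens_dist X (tens_pt X m x) (tens_pt X n y) = 0"
  shows "tens_pt X m x = tens_pt X n y"
proof -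
  have xc: "x \<in> sq_carrier X" using a by auto
  obtain \<delta> where d: "\<delta> > 0" "\<forall>p\<in>M0. \<delta> \<le> sq_dist X x (sq_map X p)" using away[OF X xc nx] by blast
  have "\<bar>Psi X x \<delta> m (m, x) - Psi X x \<delta> m (n, y)\<bar> \<le> tens_dist X (tens_pt X m x) (tens_pt X n y)"
    by (rule dist_lower[where \<delta>="\<lambda>a b. \<bar>a - b\<bar>" and F="Psi X x \<delta> m", OF Psi_step[OF X xc d(2) d(1)] _ a b]) auto
  then have e: "Psi X x \<delta> m (n, y) = \<delta> / 3" using z sq_zero[OF X xc] d(1) unfolding Psi_def by auto
  then have "n = m" using d(1) unfolding Psi_def by (auto split: if_splits)
  moreover have "sq_dist X x y \<le> 0" using e d(1) \<open>n = m\<close> unfolding Psi_def by (auto simp: max_def split: if_splits)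
  then have "x = y" using sq_zero_iff[OF X xc, of y] sq_nonneg[OF X xc, of y] b by auto
  ultimately show ?thesis by simp
qed

lemma dist_pos:
  assumes X: "is_sqms X" and a: "(m, x) \<in> Mset \<times> sq_carrier X" and b: "(n, y) \<in> Mset \<times> sq_carrier X"
    and z: "tens_dist X (tens_pt X m x) (tens_pt X n y) = 0"
  shows "tens_pt X m x = tens_pt X n y"
proof (cases "x \<in> sq_map X ` M0 \<and> y \<in> sq_map X ` M0")
  case False
  then have "x \<notin> sq_map X ` M0 \<or> y \<notin> sq_map X ` M0" by blast
  then show ?thesis
  proof
    assume "x \<notin> sq_map X ` M0" then show ?thesis using dist_pos_nonS[OF X a b _ z] by blast
  next
    assume "y \<notin> sq_map X ` M0"
    moreover have "tens_dist X (tens_pt X n y) (tens_pt X m x) = 0" using z dist_sym[OF X a b] by simp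
    ultimately show ?thesis using dist_pos_nonS[OF X b a] by metis
  qed
next
  case True
  then obtain p q where p: "p \<in> M0" "x = sq_map X p" and q: "q \<in> M0" "y = sq_map X q" by blast
  define \<sigma> where "\<sigma> = (if fst (pos n q) \<le> fst (pos m p) then 1 else -1::real)"
  define \<tau> where "\<tau> = (if snd (pos n q) \<le> snd (pos m p) then 1 else -1::real)"
  have sg: "\<sigma> \<in> {-1, 1}" "\<tau> \<in> {-1, 1}" unfolding \<sigma>_def \<tau>_def by auto
  have "\<bar>Phi X \<sigma> \<tau> (m, x) - Phi X \<sigma> \<tau> (n, y)\<bar> \<le> 0" using Phi_lower[OF X sg a b] z by simp
  then have "\<bar>fst (pos m p) - fst (pos n q)\<bar> + \<bar>snd (pos m p) - snd (pos n q)\<bar> \<le> 0"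
    using Phi_S[OF X sg p(1), of m] Phi_S[OF X sg q(1), of n] p q unfolding \<sigma>_def \<tau>_def
    by (auto split: if_splits)
  then have "fst (pos m p) = fst (pos n q)" "snd (pos m p) = snd (pos n q)"
    by (smt (verit))+
  then have "pos m p = pos n q" by (simp add: prod_eq_iff)
  then have "((m, sq_map X p), (n, sq_map X q)) \<in> tens_rel X" using pos_rel[of m n p q X] a b p q by auto
  then show ?thesis using p q by (simp add: pt_eq)
qed

lemma edge_bound:
  fixes g :: "real \<Rightarrow> real \<Rightarrow> real"
  assumes tri: "\<And>r s t. r \<in> {0..1} \<Longrightarrow> s \<in> {0..1} \<Longrightarrow> t \<in> {0..1} \<Longrightarrow> g r s \<le> g r t + g t s"
    and l: "\<And>j r s. j \<in> {0, 1, 2::nat} \<Longrightarrow> real j / 3 \<le> r \<Longrightarrow> r \<le> (real j + 1) / 3 \<Longrightarrow>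
              real j / 3 \<le> s \<Longrightarrow> s \<le> (real j + 1) / 3 \<Longrightarrow> g r s \<le> \<bar>s - r\<bar>"
    and r: "r \<in> {0..1}" and s: "s \<in> {0..1}"
  shows "g r s \<le> \<bar>s - r\<bar>"
proof -
  have l0: "g a b \<le> \<bar>b - a\<bar>" if "0 \<le> a" "a \<le> 1/3" "0 \<le> b" "b \<le> 1/3" for a b
    using l[of 0 a b] that by auto
  have l1: "g a b \<le> \<bar>b - a\<bar>" if "1/3 \<le> a" "a \<le> 2/3" "1/3 \<le> b" "b \<le> 2/3" for a b
    using l[of 1 a b] that by auto
  have l2: "g a b \<le> \<bar>b - a\<bar>" if "2/3 \<le> a" "a \<le> 1" "2/3 \<le> b" "b \<le> 1" for a b
    using l[of 2 a b] that by auto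
  have t1: "(1/3::real) \<in> {0..1}" and t2: "(2/3::real) \<in> {0..1}" by auto
  have A: "r \<le> 1/3 \<or> (1/3 \<le> r \<and> r \<le> 2/3) \<or> 2/3 \<le> r" by linarith
  have B: "s \<le> 1/3 \<or> (1/3 \<le> s \<and> s \<le> 2/3) \<or> 2/3 \<le> s" by linarith
  have r01: "0 \<le> r" "r \<le> 1" and s01: "0 \<le> s" "s \<le> 1" using r s by auto
  from A B show ?thesis
  proof (elim disjE conjE)
    assume "r \<le> 1/3" "s \<le> 1/3" then show ?thesis using l0 r01 s01 by auto
  next
    assume a: "r \<le> 1/3" "1/3 \<le> s" "s \<le> 2/3"
    have "g r s \<le> g r (1/3) + g (1/3) s" using tri[OF r s t1] .
    then show ?thesis using l0[of r "1/3"] l1[of "1/3" s] a r01 by auto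
  next
    assume a: "r \<le> 1/3" "2/3 \<le> s"
    have "g r s \<le> g r (1/3) + g (1/3) s" using tri[OF r s t1] .
    moreover have "g (1/3) s \<le> g (1/3) (2/3) + g (2/3) s" using tri[OF t1 s t2] .
    ultimately show ?thesis using l0[of r "1/3"] l1[of "1/3" "2/3"] l2[of "2/3" s] a r01 s01 by auto
  next
    assume a: "1/3 \<le> r" "r \<le> 2/3" "s \<le> 1/3"
    have "g r s \<le> g r (1/3) + g (1/3) s" using tri[OF r s t1] .
    then show ?thesis using l1[of r "1/3"] l0[of "1/3" s] a s01 by auto
  next
    assume a: "1/3 \<le> r" "r \<le> 2/3" "1/3 \<le> s" "s \<le> 2/3"
    then show ?thesis using l1 by auto
  next
    assume a: "1/3 \<le> r" "r \<le> 2/3" "2/3 \<le> s"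
    have "g r s \<le> g r (2/3) + g (2/3) s" using tri[OF r s t2] .
    then show ?thesis using l1[of r "2/3"] l2[of "2/3" s] a s01 by auto
  next
    assume a: "2/3 \<le> r" "s \<le> 1/3"
    have "g r s \<le> g r (2/3) + g (2/3) s" using tri[OF r s t2] .
    moreover have "g (2/3) s \<le> g (2/3) (1/3) + g (1/3) s" using tri[OF t2 s t1] .
    ultimately show ?thesis using l2[of r "2/3"] l1[of "2/3" "1/3"] l0[of "1/3" s] a r01 s01 by auto
  next
    assume a: "2/3 \<le> r" "1/3 \<le> s" "s \<le> 2/3"
    have "g r s \<le> g r (2/3) + g (2/3) s" using tri[OF r s t2] .
    then show ?thesis using l2[of r "2/3"] l1[of "2/3" s] a r01 by auto
  next
    assume a: "2/3 \<le> r" "2/3 \<le> s"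
    then show ?thesis using l2 r01 s01 by auto
  qed
qed

lemma cell_bound:
  assumes X: "is_sqms X" and p: "p \<in> M0" and q: "q \<in> M0" and vp: "valid m p" and vq: "valid m q"
  shows "tens_dist X (tens_sq X p) (tens_sq X q) \<le> sq_dist X (sq_map X (loc m p)) (sq_map X (loc m q)) / 3"
proof -
  have a: "(m, sq_map X (loc m p)) \<in> Mset \<times> sq_carrier X" using valid_Mset[OF vp] sq_map_in[OF X valid_loc[OF p vp]] by auto
  have b: "(m, sq_map X (loc m q)) \<in> Mset \<times> sq_carrier X" using valid_Mset[OF vq] sq_map_in[OF X valid_loc[OF q vq]] by auto
  show ?thesis unfolding tens_sq_any[OF p vp] tens_sq_any[OF q vq]
    using dist_le_cost[OF X a b] cost_same[OF X, of "(m, sq_map X (loc m p))" "(m, sq_map X (loc m q))"] a b by force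
qed

lemma tens_sq_tri:
  assumes X: "is_sqms X" and p: "p \<in> M0" and q: "q \<in> M0" and u: "u \<in> M0"
  shows "tens_dist X (tens_sq X p) (tens_sq X q) \<le> tens_dist X (tens_sq X p) (tens_sq X u) + tens_dist X (tens_sq X u) (tens_sq X q)"
  unfolding tens_sq_eq by (rule dist_tri[OF X tens_sq_in[OF X p] tens_sq_in[OF X u] tens_sq_in[OF X q]])

lemma sq1a_tens:
  assumes X: "is_sqms X" and i: "i \<in> {0, 1}" and r: "r \<in> {0..1}" and s: "s \<in> {0..1}"
  shows "tens_dist X (tens_sq X (i, r)) (tens_sq X (i, s)) = \<bar>s - r\<bar>"
proof (rule antisym)
  have M: "(i, t) \<in> M0" if "t \<in> {0..1}" for t using i that by (auto simp: M0_iff)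
  show "tens_dist X (tens_sq X (i, r)) (tens_sq X (i, s)) \<le> \<bar>s - r\<bar>"
  proof (rule edge_bound[where g="\<lambda>r s. tens_dist X (tens_sq X (i, r)) (tens_sq X (i, s))", OF _ _ r s])
    fix a b t :: real assume "a \<in> {0..1}" "b \<in> {0..1}" "t \<in> {0..1}"
    then show "tens_dist X (tens_sq X (i, a)) (tens_sq X (i, b)) \<le> tens_dist X (tens_sq X (i, a)) (tens_sq X (i, t)) + tens_dist X (tens_sq X (i, t)) (tens_sq X (i, b))"
      using tens_sq_tri[OF X M M M] by blast
  next
    fix j :: nat and a b :: real
    assume j: "j \<in> {0, 1, 2}" and ab: "real j / 3 \<le> a" "a \<le> (real j + 1) / 3" "real j / 3 \<le> b" "b \<le> (real j + 1) / 3"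
    define mi :: nat where "mi = (if i = 0 then 0 else 2)"
    have mi: "3 * i - real mi = i" using i unfolding mi_def by auto
    have Mm: "(mi, j) \<in> Mset" using j i unfolding mi_def Mset_iff by auto
    have a01: "a \<in> {0..1}" "b \<in> {0..1}" using ab j by auto
    have va: "valid (mi, j) (i, a)" and vb: "valid (mi, j) (i, b)" using Mm mi ab i unfolding valid_def by auto
    have la: "loc (mi, j) (i, a) = (i, 3 * a - real j)" and lb: "loc (mi, j) (i, b) = (i, 3 * b - real j)"
      using mi unfolding loc_def by auto
    have "tens_dist X (tens_sq X (i, a)) (tens_sq X (i, b)) \<le> sq_dist X (sq_map X (i, 3 * a - real j)) (sq_map X (i, 3 * b - real j)) / 3"
      using cell_bound[OF X M[OF a01(1)] M[OF a01(2)] va vb] la lb by simp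
    also have "\<dots> = \<bar>(3 * b - real j) - (3 * a - real j)\<bar> / 3"
      using sq1a[OF X i, of "3 * a - real j" "3 * b - real j"] ab by (auto simp: field_simps)
    also have "\<dots> = \<bar>b - a\<bar>"
    proof -
      have "\<bar>(3 * b - real j) - (3 * a - real j)\<bar> = 3 * \<bar>b - a\<bar>" by (auto simp: abs_if)
      then show ?thesis by simp
    qed
    finally show "tens_dist X (tens_sq X (i, a)) (tens_sq X (i, b)) \<le> \<bar>b - a\<bar>" .
  qed
  show "\<bar>s - r\<bar> \<le> tens_dist X (tens_sq X (i, r)) (tens_sq X (i, s))"
    using sq2_tens[OF X M[OF r] M[OF s]] by simp
qed

lemma sq1b_tens:
  assumes X: "is_sqms X" and i: "i \<in> {0, 1}" and r: "r \<in> {0..1}" and s: "s \<in> {0..1}"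
  shows "tens_dist X (tens_sq X (r, i)) (tens_sq X (s, i)) = \<bar>s - r\<bar>"
proof (rule antisym)
  have M: "(t, i) \<in> M0" if "t \<in> {0..1}" for t using i that by (auto simp: M0_iff)
  show "tens_dist X (tens_sq X (r, i)) (tens_sq X (s, i)) \<le> \<bar>s - r\<bar>"
  proof (rule edge_bound[where g="\<lambda>r s. tens_dist X (tens_sq X (r, i)) (tens_sq X (s, i))", OF _ _ r s])
    fix a b t :: real assume "a \<in> {0..1}" "b \<in> {0..1}" "t \<in> {0..1}"
    then show "tens_dist X (tens_sq X (a, i)) (tens_sq X (b, i)) \<le> tens_dist X (tens_sq X (a, i)) (tens_sq X (t, i)) + tens_dist X (tens_sq X (t, i)) (tens_sq X (b, i))"
      using tens_sq_tri[OF X M M M] by blast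
  next
    fix j :: nat and a b :: real
    assume j: "j \<in> {0, 1, 2}" and ab: "real j / 3 \<le> a" "a \<le> (real j + 1) / 3" "real j / 3 \<le> b" "b \<le> (real j + 1) / 3"
    define mi :: nat where "mi = (if i = 0 then 0 else 2)"
    have mi: "3 * i - real mi = i" using i unfolding mi_def by auto
    have Mm: "(j, mi) \<in> Mset" using j i unfolding mi_def Mset_iff by auto
    have a01: "a \<in> {0..1}" "b \<in> {0..1}" using ab j by auto
    have va: "valid (j, mi) (a, i)" and vb: "valid (j, mi) (b, i)" using Mm mi ab i unfolding valid_def by auto
    have la: "loc (j, mi) (a, i) = (3 * a - real j, i)" and lb: "loc (j, mi) (b, i) = (3 * b - real j, i)"
      using mi unfolding loc_def by auto
    have "tens_dist X (tens_sq X (a, i)) (tens_sq X (b, i)) \<le> sq_dist X (sq_map X (3 * a - real j, i)) (sq_map X (3 * b - real j, i)) / 3"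
      using cell_bound[OF X M[OF a01(1)] M[OF a01(2)] va vb] la lb by simp
    also have "\<dots> = \<bar>(3 * b - real j) - (3 * a - real j)\<bar> / 3"
      using sq1b[OF X i, of "3 * a - real j" "3 * b - real j"] ab by (auto simp: field_simps)
    also have "\<dots> = \<bar>b - a\<bar>"
    proof -
      have "\<bar>(3 * b - real j) - (3 * a - real j)\<bar> = 3 * \<bar>b - a\<bar>" by (auto simp: abs_if)
      then show ?thesis by simp
    qed
    finally show "tens_dist X (tens_sq X (a, i)) (tens_sq X (b, i)) \<le> \<bar>b - a\<bar>" .
  qed
  show "\<bar>s - r\<bar> \<le> tens_dist X (tens_sq X (r, i)) (tens_sq X (s, i))"
    using sq2_tens[OF X M[OF r] M[OF s]] by simp
qed



lemma tens_carrierE: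
  assumes "P \<in> tens_carrier X"
  obtains m x where "P = tens_pt X m x" "(m, x) \<in> Mset \<times> sq_carrier X"
  using assms unfolding tens_carrier_def by blast

lemma tens_carrierI: "(m, x) \<in> Mset \<times> sq_carrier X \<Longrightarrow> tens_pt X m x \<in> tens_carrier X"
  unfolding tens_carrier_def by blast

lemma tens_sel[simp]: "sq_carrier (tens X) = tens_carrier X" "sq_dist (tens X) = tens_dist X" "sq_map (tens X) = tens_sq X"
  unfolding tens_def by simp_all

theorem tens_sqms:
  assumes X: "is_sqms X"
  shows "is_sqms (tens X)"
proof -
  have A: "0 \<le> tens_dist X P Q \<and> tens_dist X P Q \<le> 2 \<and> (tens_dist X P Q = 0 \<longleftrightarrow> P = Q) \<and> tens_dist X P Q = tens_dist X Q P"
    if P: "P \<in> tens_carrier X" and Q: "Q \<in> tens_carrier X" for P Q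
  proof -
    obtain m x where P': "P = tens_pt X m x" "(m, x) \<in> Mset \<times> sq_carrier X" using P by (rule tens_carrierE)
    obtain n y where Q': "Q = tens_pt X n y" "(n, y) \<in> Mset \<times> sq_carrier X" using Q by (rule tens_carrierE)
    have z: "tens_dist X (tens_pt X m x) (tens_pt X n y) = 0 \<longleftrightarrow> tens_pt X m x = tens_pt X n y"
    proof
      assume "tens_dist X (tens_pt X m x) (tens_pt X n y) = 0"
      then show "tens_pt X m x = tens_pt X n y" by (rule dist_pos[OF X P'(2) Q'(2)])
    next
      assume e: "tens_pt X m x = tens_pt X n y"
      show "tens_dist X (tens_pt X m x) (tens_pt X n y) = 0" unfolding e[symmetric] by (rule dist_self[OF X P'(2)])
    qed
    show ?thesis unfolding P'(1) Q'(1)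
      using dist_nonneg[OF X P'(2) Q'(2)] dist_le2[OF X P'(2) Q'(2)] z
        dist_sym[OF X P'(2) Q'(2)] by blast
  qed
  have B: "tens_dist X P R \<le> tens_dist X P Q + tens_dist X Q R"
    if P: "P \<in> tens_carrier X" and Q: "Q \<in> tens_carrier X" and R: "R \<in> tens_carrier X" for P Q R
  proof -
    obtain m x where P': "P = tens_pt X m x" "(m, x) \<in> Mset \<times> sq_carrier X" using P by (rule tens_carrierE)
    obtain n y where Q': "Q = tens_pt X n y" "(n, y) \<in> Mset \<times> sq_carrier X" using Q by (rule tens_carrierE)
    obtain k u where R': "R = tens_pt X k u" "(k, u) \<in> Mset \<times> sq_carrier X" using R by (rule tens_carrierE)
    show ?thesis unfolding P'(1) Q'(1) R'(1) by (rule dist_tri[OF X P'(2) Q'(2) R'(2)])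
  qed
  have Cc: "tens_sq X ` M0 \<subseteq> tens_carrier X"
  proof
    fix P assume "P \<in> tens_sq X ` M0"
    then obtain p where p: "p \<in> M0" and P: "P = tens_sq X p" by blast
    show "P \<in> tens_carrier X" unfolding P tens_sq_eq by (rule tens_carrierI[OF tens_sq_in[OF X p]])
  qed
  have D: "inj_on (tens_sq X) M0"
  proof (rule inj_onI)
    fix p q assume p: "p \<in> M0" and q: "q \<in> M0" and e: "tens_sq X p = tens_sq X q"
    have "tens_dist X (tens_sq X p) (tens_sq X q) = 0"
      using e A[of "tens_sq X q" "tens_sq X q"] Cc q by auto
    then have "\<bar>fst p - fst q\<bar> + \<bar>snd p - snd q\<bar> \<le> 0" using sq2_tens[OF X p q] by simp
    then have "fst p = fst q" "snd p = snd q" by (smt (verit))+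
    then show "p = q" by (simp add: prod_eq_iff)
  qed
  have E: "\<forall>i\<in>{0, 1}. \<forall>r\<in>{0..1}. \<forall>s\<in>{0..1}.
          tens_dist X (tens_sq X (i, r)) (tens_sq X (i, s)) = \<bar>s - r\<bar> \<and> tens_dist X (tens_sq X (r, i)) (tens_sq X (s, i)) = \<bar>s - r\<bar>"
    using sq1a_tens[OF X] sq1b_tens[OF X] by blast
  have F: "\<forall>p\<in>M0. \<forall>q\<in>M0. tens_dist X (tens_sq X p) (tens_sq X q) \<ge> \<bar>fst p - fst q\<bar> + \<bar>snd p - snd q\<bar>"
    using sq2_tens[OF X] by blast
  have A': "\<forall>P\<in>tens_carrier X. \<forall>Q\<in>tens_carrier X. 0 \<le> tens_dist X P Q \<and> tens_dist X P Q \<le> 2 \<and> (tens_dist X P Q = 0 \<longleftrightarrow> P = Q) \<and> tens_dist X P Q = tens_dist X Q P"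
    using A by blast
  have B': "\<forall>P\<in>tens_carrier X. \<forall>Q\<in>tens_carrier X. \<forall>R\<in>tens_carrier X. tens_dist X P R \<le> tens_dist X P Q + tens_dist X Q R"
    using B by blast
  show ?thesis
    unfolding is_sqms_def[of "tens X"] Let_def tens_sel
    by (intro conjI; fact)
qed



section \<open>The functor on morphisms\<close>

lemma gen_E:
  assumes "(a, b) \<in> tens_gen X"
  shows "\<exists>m n p q. (a, b) = ((m, sq_map X p), (n, sq_map X q)) \<and>
      m \<in> Mset \<and> n \<in> Mset \<and> adjacent m n \<and> p \<in> M0 \<and> q \<in> M0 \<and>
      (real (fst m) + fst p) / 3 = (real (fst n) + fst q) / 3 \<and>
      (real (snd m) + snd p) / 3 = (real (snd n) + snd q) / 3"
  using assms unfolding tens_gen_def mem_Collect_eq by blast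

lemma gen_map:
  assumes S: "\<forall>p\<in>M0. f (sq_map X p) = sq_map Y p" and g: "(a, b) \<in> tens_gen X"
  shows "((fst a, f (snd a)), (fst b, f (snd b))) \<in> tens_gen Y"
proof -
  obtain m n p q where e: "(a, b) = ((m, sq_map X p), (n, sq_map X q))" and
      h: "m \<in> Mset" "n \<in> Mset" "adjacent m n" "p \<in> M0" "q \<in> M0"
      "(real (fst m) + fst p) / 3 = (real (fst n) + fst q) / 3"
      "(real (snd m) + snd p) / 3 = (real (snd n) + snd q) / 3"
    using gen_E[OF g] by blast
  have G: "((m, sq_map Y p), (n, sq_map Y q)) \<in> tens_gen Y" unfolding tens_gen_def mem_Collect_eq
    by (rule exI[of _ m], rule exI[of _ n], rule exI[of _ p], rule exI[of _ q]) (use h in simp)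
  have "a = (m, sq_map X p)" "b = (n, sq_map X q)" using e by auto
  then show ?thesis using G S h(4,5) by simp
qed

lemma rel_map:
  assumes S: "\<forall>p\<in>M0. f (sq_map X p) = sq_map Y p" and r: "(z, w) \<in> tens_rel X"
  shows "((fst z, f (snd z)), (fst w, f (snd w))) \<in> tens_rel Y"
  using r unfolding tens_rel_def
proof (induction rule: rtrancl_induct)
  case base then show ?case by simp
next
  case (step y u)
  have "(y, u) \<in> tens_gen X \<or> (u, y) \<in> tens_gen X" using step(2) by blast
  then have g: "((fst y, f (snd y)), (fst u, f (snd u))) \<in> tens_gen Y \<union> (tens_gen Y)\<inverse>"
    using gen_map[OF S] by blast
  show ?case using step(3) g by (rule rtrancl.rtrancl_into_rtrancl)
qed

lemma tens_map_pt:
  assumes S: "\<forall>p\<in>M0. f (sq_map X p) = sq_map Y p" and a: "(m, x) \<in> Mset \<times> sq_carrier X"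
  shows "tens_map X Y f (tens_pt X m x) = tens_pt Y m (f x)"
proof -
  let ?z = "SOME z. z \<in> tens_pt X m x \<and> z \<in> Mset \<times> sq_carrier X"
  have "?z \<in> tens_pt X m x \<and> ?z \<in> Mset \<times> sq_carrier X"
    by (rule someI[of _ "(m, x)"]) (use a pt_self[of m x X] in auto)
  then have "((m, x), ?z) \<in> tens_rel X" by (simp add: mem_pt)
  then have "((m, f x), (fst ?z, f (snd ?z))) \<in> tens_rel Y" using rel_map[OF S] by fastforce
  then have "tens_pt Y m (f x) = tens_pt Y (fst ?z) (f (snd ?z))" by (rule pt_eq)
  then show ?thesis unfolding tens_map_def Let_def by simp
qed

lemma tens_map_sq:
  assumes X: "is_sqms X" and S: "\<forall>p\<in>M0. f (sq_map X p) = sq_map Y p" and p: "p \<in> M0"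
  shows "tens_map X Y f (tens_sq X p) = tens_sq Y p"
proof -
  have l: "loc (msel p) p \<in> M0" using valid_loc[OF p valid_msel[OF p]] .
  show ?thesis unfolding tens_sq_eq[of X] tens_sq_eq[of Y]
    using tens_map_pt[OF S tens_sq_in[OF X p]] S l by simp
qed

lemma tens_map_hom:
  assumes X: "is_sqms X" and Y: "is_sqms Y" and f: "sq_hom X Y f"
  shows "sq_hom (tens X) (tens Y) (tens_map X Y f)"
proof -
  have S: "\<forall>p\<in>M0. f (sq_map X p) = sq_map Y p" using sq_homD(3)[OF f] by blast
  have fc: "f x \<in> sq_carrier Y" if "x \<in> sq_carrier X" for x using sq_homD(1)[OF f that] .
  define F where "F z = tens_pt Y (fst z) (f (snd z))" for z
  have Fin: "(fst z, f (snd z)) \<in> Mset \<times> sq_carrier Y" if "z \<in> Mset \<times> sq_carrier X" for z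
    using that fc by auto
  have step: "tens_dist Y (F z) (F w) \<le> tens_cost X z w"
    if z: "z \<in> Mset \<times> sq_carrier X" and w: "w \<in> Mset \<times> sq_carrier X" for z w
  proof (cases "(z, w) \<in> tens_rel X")
    case True
    then have "F z = F w" unfolding F_def using pt_eq[OF rel_map[OF S True]] by simp
    then show ?thesis using dist_self[OF Y Fin[OF z]] cost_rel[OF True] unfolding F_def by simp
  next
    case nr: False
    show ?thesis
    proof (cases "fst z = fst w")
      case True
      have "tens_dist Y (F z) (F w) \<le> tens_cost Y (fst z, f (snd z)) (fst w, f (snd w))"
        unfolding F_def using dist_le_cost[OF Y Fin[OF z] Fin[OF w]] by simp
      also have "\<dots> \<le> sq_dist Y (f (snd z)) (f (snd w)) / 3"
        using cost_same[OF Y, of "(fst z, f (snd z))" "(fst w, f (snd w))"] Fin[OF z] Fin[OF w] True by auto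
      also have "\<dots> \<le> sq_dist X (snd z) (snd w) / 3" using sq_homD(2)[OF f, of "snd z" "snd w"] z w by auto
      also have "\<dots> = tens_cost X z w" using nr True unfolding tens_cost_def by simp
      finally show ?thesis .
    next
      case False
      have "tens_cost X z w = 2" using nr False unfolding tens_cost_def by simp
      then show ?thesis unfolding F_def using dist_le2[OF Y Fin[OF z] Fin[OF w]] by simp
    qed
  qed
  have tri: "tens_dist Y (F z) (F u) \<le> tens_dist Y (F z) (F w) + tens_dist Y (F w) (F u)"
    if "z \<in> Mset \<times> sq_carrier X" "w \<in> Mset \<times> sq_carrier X" "u \<in> Mset \<times> sq_carrier X" for z w u
    unfolding F_def by (rule dist_tri[OF Y Fin Fin Fin]) (use that in auto)
  show ?thesis unfolding sq_hom_def tens_sel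
  proof (intro conjI ballI subsetI)
    fix Q assume "Q \<in> tens_map X Y f ` tens_carrier X"
    then obtain P where P: "P \<in> tens_carrier X" and Q: "Q = tens_map X Y f P" by blast
    obtain m x where P': "P = tens_pt X m x" "(m, x) \<in> Mset \<times> sq_carrier X" using P by (rule tens_carrierE)
    show "Q \<in> tens_carrier Y" unfolding Q P'(1) tens_map_pt[OF S P'(2)]
      by (rule tens_carrierI) (use P'(2) fc in auto)
  next
    fix P Q assume P: "P \<in> tens_carrier X" and Q: "Q \<in> tens_carrier X"
    obtain m x where P': "P = tens_pt X m x" "(m, x) \<in> Mset \<times> sq_carrier X" using P by (rule tens_carrierE)
    obtain n y where Q': "Q = tens_pt X n y" "(n, y) \<in> Mset \<times> sq_carrier X" using Q by (rule tens_carrierE)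
    show "tens_dist Y (tens_map X Y f P) (tens_map X Y f Q) \<le> tens_dist X P Q"
      unfolding P'(1) Q'(1) tens_map_pt[OF S P'(2)] tens_map_pt[OF S Q'(2)]
      using dist_lower[where \<delta>="tens_dist Y" and F=F, OF step tri P'(2) Q'(2)] unfolding F_def by simp
  next
    fix p assume "p \<in> M0"
    then show "tens_map X Y f (tens_sq X p) = tens_sq Y p" by (rule tens_map_sq[OF X S])
  qed
qed



section \<open>An explicit colimit of the chain\<close>

definition Ucar :: "(nat \<Rightarrow> 'a sqms) \<Rightarrow> (nat \<times> 'a) set" where
  "Ucar A = {(k, x). x \<in> sq_carrier (A k)}"

definition dj :: "(nat \<Rightarrow> 'a sqms) \<Rightarrow> (nat \<Rightarrow> nat \<Rightarrow> 'a \<Rightarrow> 'a) \<Rightarrow> nat \<Rightarrow> nat \<times> 'a \<Rightarrow> nat \<times> 'a \<Rightarrow> real" where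
  "dj A a j z w = sq_dist (A j) (a (fst z) j (snd z)) (a (fst w) j (snd w))"

definition rho :: "(nat \<Rightarrow> 'a sqms) \<Rightarrow> (nat \<Rightarrow> nat \<Rightarrow> 'a \<Rightarrow> 'a) \<Rightarrow> nat \<times> 'a \<Rightarrow> nat \<times> 'a \<Rightarrow> real" where
  "rho A a z w = Inf ((\<lambda>j. dj A a j z w) ` {j. fst z \<le> j \<and> fst w \<le> j})"

definition rep :: "(nat \<Rightarrow> 'a sqms) \<Rightarrow> (nat \<Rightarrow> nat \<Rightarrow> 'a \<Rightarrow> 'a) \<Rightarrow> nat \<times> 'a \<Rightarrow> nat \<times> 'a" where
  "rep A a z = (SOME w. w \<in> Ucar A \<and> rho A a z w = 0)"

definition Lsp :: "(nat \<Rightarrow> 'a sqms) \<Rightarrow> (nat \<Rightarrow> nat \<Rightarrow> 'a \<Rightarrow> 'a) \<Rightarrow> (nat \<times> 'a) sqms" where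
  "Lsp A a = \<lparr>sq_carrier = rep A a ` Ucar A, sq_dist = rho A a, sq_map = (\<lambda>p. rep A a (0, sq_map (A 0) p))\<rparr>"

lemma Lsp_sel[simp]: "sq_carrier (Lsp A a) = rep A a ` Ucar A" "sq_dist (Lsp A a) = rho A a"
  "sq_map (Lsp A a) = (\<lambda>p. rep A a (0, sq_map (A 0) p))"
  unfolding Lsp_def by simp_all

lemma Ucar_iff[simp]: "(k, x) \<in> Ucar A \<longleftrightarrow> x \<in> sq_carrier (A k)"
  unfolding Ucar_def by simp

context
  fixes A :: "nat \<Rightarrow> 'a sqms" and a :: "nat \<Rightarrow> nat \<Rightarrow> 'a \<Rightarrow> 'a"
  assumes ch: "sq_chain A a"
begin

lemma chA: "is_sqms (A k)" using ch unfolding sq_chain_def by blast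
lemma chhom: "k \<le> l \<Longrightarrow> sq_hom (A k) (A l) (a k l)" using ch unfolding sq_chain_def by blast
lemma chid: "x \<in> sq_carrier (A k) \<Longrightarrow> a k k x = x" using ch unfolding sq_chain_def by blast
lemma chcomp: "k \<le> l \<Longrightarrow> l \<le> m \<Longrightarrow> x \<in> sq_carrier (A k) \<Longrightarrow> a l m (a k l x) = a k m x"
  using ch unfolding sq_chain_def by blast
lemma chin: "k \<le> l \<Longrightarrow> x \<in> sq_carrier (A k) \<Longrightarrow> a k l x \<in> sq_carrier (A l)"
  using sq_homD(1)[OF chhom] by blast

lemma in_U: "z \<in> Ucar A \<Longrightarrow> fst z \<le> j \<Longrightarrow> a (fst z) j (snd z) \<in> sq_carrier (A j)"
  using chin by (cases z) auto

lemma dj_nonneg: "z \<in> Ucar A \<Longrightarrow> w \<in> Ucar A \<Longrightarrow> fst z \<le> j \<Longrightarrow> fst w \<le> j \<Longrightarrow> 0 \<le> dj A a j z w"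
  unfolding dj_def using sq_nonneg[OF chA in_U in_U] by blast

lemma dj_le2: "z \<in> Ucar A \<Longrightarrow> w \<in> Ucar A \<Longrightarrow> fst z \<le> j \<Longrightarrow> fst w \<le> j \<Longrightarrow> dj A a j z w \<le> 2"
  unfolding dj_def using sq_le2[OF chA in_U in_U] by blast

lemma dj_sym: "z \<in> Ucar A \<Longrightarrow> w \<in> Ucar A \<Longrightarrow> fst z \<le> j \<Longrightarrow> fst w \<le> j \<Longrightarrow> dj A a j z w = dj A a j w z"
  unfolding dj_def using sq_sym[OF chA in_U in_U] by blast

lemma dj_tri: "z \<in> Ucar A \<Longrightarrow> w \<in> Ucar A \<Longrightarrow> u \<in> Ucar A \<Longrightarrow> fst z \<le> j \<Longrightarrow> fst w \<le> j \<Longrightarrow> fst u \<le> j \<Longrightarrow>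
   dj A a j z u \<le> dj A a j z w + dj A a j w u"
  unfolding dj_def using sq_tri[OF chA in_U in_U in_U] by blast

lemma dj_mono:
  assumes z: "z \<in> Ucar A" and w: "w \<in> Ucar A" and j: "fst z \<le> j" "fst w \<le> j" and jj: "j \<le> j'"
  shows "dj A a j' z w \<le> dj A a j z w"
proof -
  have "a (fst z) j' (snd z) = a j j' (a (fst z) j (snd z))" using chcomp[OF j(1) jj] z by (cases z) auto
  moreover have "a (fst w) j' (snd w) = a j j' (a (fst w) j (snd w))" using chcomp[OF j(2) jj] w by (cases w) auto
  ultimately show ?thesis unfolding dj_def
    using sq_homD(2)[OF chhom[OF jj] in_U[OF z j(1)] in_U[OF w j(2)]] by simp
qed

lemma rho_le: "z \<in> Ucar A \<Longrightarrow> w \<in> Ucar A \<Longrightarrow> fst z \<le> j \<Longrightarrow> fst w \<le> j \<Longrightarrow> rho A a z w \<le> dj A a j z w"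
  unfolding rho_def by (rule cInf_lower) (auto simp: bdd_below_def intro!: exI[of _ 0] dj_nonneg)

lemma rho_ge: "(\<And>j. fst z \<le> j \<Longrightarrow> fst w \<le> j \<Longrightarrow> c \<le> dj A a j z w) \<Longrightarrow> c \<le> rho A a z w"
  unfolding rho_def by (rule cInf_greatest) (auto intro: exI[of _ "max (fst z) (fst w)"])

lemma rho_nonneg: "z \<in> Ucar A \<Longrightarrow> w \<in> Ucar A \<Longrightarrow> 0 \<le> rho A a z w"
  by (rule rho_ge) (rule dj_nonneg)

lemma rho_le2: "z \<in> Ucar A \<Longrightarrow> w \<in> Ucar A \<Longrightarrow> rho A a z w \<le> 2"
  using rho_le[of z w "max (fst z) (fst w)"] dj_le2[of z w "max (fst z) (fst w)"] by auto

lemma rho_sym: "z \<in> Ucar A \<Longrightarrow> w \<in> Ucar A \<Longrightarrow> rho A a z w = rho A a w z"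
proof -
  assume z: "z \<in> Ucar A" and w: "w \<in> Ucar A"
  have "(\<lambda>j. dj A a j z w) ` {j. fst z \<le> j \<and> fst w \<le> j} = (\<lambda>j. dj A a j w z) ` {j. fst w \<le> j \<and> fst z \<le> j}"
    by (rule image_cong) (auto intro: dj_sym[OF z w])
  then show ?thesis unfolding rho_def by simp
qed

lemma rho_refl: "z \<in> Ucar A \<Longrightarrow> rho A a z z = 0"
  using rho_le[of z z "fst z"] rho_nonneg[of z z] unfolding dj_def
  using sq_zero[OF chA in_U[of z "fst z"]] by auto

lemma rho_approx:
  assumes z: "z \<in> Ucar A" and w: "w \<in> Ucar A" and e: "0 < \<epsilon>"
  shows "\<exists>j. fst z \<le> j \<and> fst w \<le> j \<and> dj A a j z w < rho A a z w + \<epsilon>"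
proof (rule ccontr)
  assume "\<not> ?thesis"
  then have "rho A a z w + \<epsilon> \<le> rho A a z w" by (intro rho_ge) (auto simp: not_less)
  then show False using e by simp
qed

lemma rho_tri:
  assumes z: "z \<in> Ucar A" and w: "w \<in> Ucar A" and u: "u \<in> Ucar A"
  shows "rho A a z u \<le> rho A a z w + rho A a w u"
proof (rule field_le_epsilon)
  fix e :: real assume e: "0 < e"
  obtain j1 where j1: "fst z \<le> j1" "fst w \<le> j1" "dj A a j1 z w < rho A a z w + e / 2"
    using rho_approx[OF z w, of "e/2"] e by auto
  obtain j2 where j2: "fst w \<le> j2" "fst u \<le> j2" "dj A a j2 w u < rho A a w u + e / 2"
    using rho_approx[OF w u, of "e/2"] e by auto
  define j where "j = max j1 j2"
  have "rho A a z u \<le> dj A a j z u" using j1 j2 unfolding j_def by (intro rho_le[OF z u]) auto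
  also have "\<dots> \<le> dj A a j z w + dj A a j w u" using j1 j2 unfolding j_def by (intro dj_tri[OF z w u]) auto
  also have "dj A a j z w \<le> dj A a j1 z w" using j1 unfolding j_def by (intro dj_mono[OF z w]) auto
  also have "dj A a j w u \<le> dj A a j2 w u" using j2 unfolding j_def by (intro dj_mono[OF w u]) auto
  finally show "rho A a z u \<le> rho A a z w + rho A a w u + e" using j1(3) j2(3) by linarith
qed

lemma rep_props: assumes z: "z \<in> Ucar A" shows "rep A a z \<in> Ucar A \<and> rho A a z (rep A a z) = 0"
  unfolding rep_def by (rule someI[of _ z]) (use z rho_refl in auto)

lemma rep_eq: assumes z: "z \<in> Ucar A" and w: "w \<in> Ucar A" and r: "rho A a z w = 0"
  shows "rep A a z = rep A a w"
proof -
  have "(\<lambda>v. v \<in> Ucar A \<and> rho A a z v = 0) = (\<lambda>v. v \<in> Ucar A \<and> rho A a w v = 0)"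
  proof (rule ext, rule iffI)
    fix v assume v: "v \<in> Ucar A \<and> rho A a z v = 0"
    have "rho A a w v \<le> rho A a w z + rho A a z v" using rho_tri[OF w z] v by blast
    then show "v \<in> Ucar A \<and> rho A a w v = 0" using v rho_sym[OF z w] r rho_nonneg[OF w, of v] by auto
  next
    fix v assume v: "v \<in> Ucar A \<and> rho A a w v = 0"
    have "rho A a z v \<le> rho A a z w + rho A a w v" using rho_tri[OF z w] v by blast
    then show "v \<in> Ucar A \<and> rho A a z v = 0" using v r rho_nonneg[OF z, of v] by auto
  qed
  then show ?thesis unfolding rep_def by simp
qed

lemma rho_rep: assumes z: "z \<in> Ucar A" and w: "w \<in> Ucar A"
  shows "rho A a (rep A a z) (rep A a w) = rho A a z w"
proof -
  have rz: "rep A a z \<in> Ucar A" "rho A a z (rep A a z) = 0" using rep_props[OF z] by auto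
  have rw: "rep A a w \<in> Ucar A" "rho A a w (rep A a w) = 0" using rep_props[OF w] by auto
  have "rho A a (rep A a z) (rep A a w) \<le> rho A a (rep A a z) z + rho A a z (rep A a w)" by (rule rho_tri[OF rz(1) z rw(1)])
  also have "rho A a z (rep A a w) \<le> rho A a z w + rho A a w (rep A a w)" by (rule rho_tri[OF z w rw(1)])
  finally have 1: "rho A a (rep A a z) (rep A a w) \<le> rho A a z w" using rz rw rho_sym[OF rz(1) z] by simp
  have "rho A a z w \<le> rho A a z (rep A a z) + rho A a (rep A a z) w" by (rule rho_tri[OF z rz(1) w])
  also have "rho A a (rep A a z) w \<le> rho A a (rep A a z) (rep A a w) + rho A a (rep A a w) w" by (rule rho_tri[OF rz(1) rw(1) w])
  finally have 2: "rho A a z w \<le> rho A a (rep A a z) (rep A a w)" using rz rw rho_sym[OF rw(1) w] by simp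
  show ?thesis using 1 2 by simp
qed

lemma rep_rep: "z \<in> Ucar A \<Longrightarrow> rep A a (rep A a z) = rep A a z"
  using rep_eq[of "rep A a z" z] rep_props[of z] rho_sym[of z "rep A a z"] by auto

lemma S_in_U: "p \<in> M0 \<Longrightarrow> (k, sq_map (A k) p) \<in> Ucar A"
  using sq_map_in[OF chA] by simp

lemma dj_S: "p \<in> M0 \<Longrightarrow> q \<in> M0 \<Longrightarrow> dj A a j (0, sq_map (A 0) p) (0, sq_map (A 0) q) = sq_dist (A j) (sq_map (A j) p) (sq_map (A j) q)"
  unfolding dj_def using sq_homD(3)[OF chhom[of 0 j]] by simp

lemma rho_S: assumes p: "p \<in> M0" and q: "q \<in> M0"
  shows "rho A a (rep A a (0, sq_map (A 0) p)) (rep A a (0, sq_map (A 0) q)) = rho A a (0, sq_map (A 0) p) (0, sq_map (A 0) q)"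
  by (rule rho_rep[OF S_in_U[OF p] S_in_U[OF q]])

theorem Lsp_sqms: "is_sqms (Lsp A a)"
proof -
  have A1: "\<forall>P\<in>rep A a ` Ucar A. \<forall>Q\<in>rep A a ` Ucar A. 0 \<le> rho A a P Q \<and> rho A a P Q \<le> 2 \<and>
      (rho A a P Q = 0 \<longleftrightarrow> P = Q) \<and> rho A a P Q = rho A a Q P"
  proof (intro ballI)
    fix P Q assume "P \<in> rep A a ` Ucar A" "Q \<in> rep A a ` Ucar A"
    then obtain z w where z: "z \<in> Ucar A" "P = rep A a z" and w: "w \<in> Ucar A" "Q = rep A a w" by blast
    have P: "P \<in> Ucar A" and Q: "Q \<in> Ucar A" using rep_props z w by auto
    have "rho A a P Q = 0 \<longleftrightarrow> P = Q"
    proof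
      assume "rho A a P Q = 0"
      then have "rep A a P = rep A a Q" by (rule rep_eq[OF P Q])
      then show "P = Q" using rep_rep z w by simp
    next
      assume "P = Q" then show "rho A a P Q = 0" using rho_refl[OF P] by simp
    qed
    then show "0 \<le> rho A a P Q \<and> rho A a P Q \<le> 2 \<and> (rho A a P Q = 0 \<longleftrightarrow> P = Q) \<and> rho A a P Q = rho A a Q P"
      using rho_nonneg[OF P Q] rho_le2[OF P Q] rho_sym[OF P Q] by blast
  qed
  have A2: "\<forall>P\<in>rep A a ` Ucar A. \<forall>Q\<in>rep A a ` Ucar A. \<forall>R\<in>rep A a ` Ucar A. rho A a P R \<le> rho A a P Q + rho A a Q R"
    using rho_tri rep_props by blast
  have A3: "(\<lambda>p. rep A a (0, sq_map (A 0) p)) ` M0 \<subseteq> rep A a ` Ucar A"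
    using S_in_U by blast
  have rS: "rho A a (rep A a (0, sq_map (A 0) p)) (rep A a (0, sq_map (A 0) q)) = c"
    if p: "p \<in> M0" and q: "q \<in> M0" and c: "\<And>j. sq_dist (A j) (sq_map (A j) p) (sq_map (A j) q) = c" for p q c
  proof -
    have "rho A a (0, sq_map (A 0) p) (0, sq_map (A 0) q) = c"
    proof (rule antisym)
      show "rho A a (0, sq_map (A 0) p) (0, sq_map (A 0) q) \<le> c"
        using rho_le[OF S_in_U[of p 0] S_in_U[of q 0], of 0] dj_S[OF p q, of 0] c p q by simp
      show "c \<le> rho A a (0, sq_map (A 0) p) (0, sq_map (A 0) q)"
        by (rule rho_ge) (simp add: dj_S[OF p q] c)
    qed
    then show ?thesis using rho_S[OF p q] by simp
  qed
  have A6: "\<forall>p\<in>M0. \<forall>q\<in>M0. rho A a (rep A a (0, sq_map (A 0) p)) (rep A a (0, sq_map (A 0) q)) \<ge> \<bar>fst p - fst q\<bar> + \<bar>snd p - snd q\<bar>"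
  proof (intro ballI)
    fix p q assume p: "p \<in> M0" and q: "q \<in> M0"
    have "\<bar>fst p - fst q\<bar> + \<bar>snd p - snd q\<bar> \<le> rho A a (0, sq_map (A 0) p) (0, sq_map (A 0) q)"
      by (rule rho_ge) (simp add: dj_S[OF p q] sq2[OF chA p q])
    then show "rho A a (rep A a (0, sq_map (A 0) p)) (rep A a (0, sq_map (A 0) q)) \<ge> \<bar>fst p - fst q\<bar> + \<bar>snd p - snd q\<bar>"
      using rho_S[OF p q] by simp
  qed
  have A4: "inj_on (\<lambda>p. rep A a (0, sq_map (A 0) p)) M0"
  proof (rule inj_onI)
    fix p q assume p: "p \<in> M0" and q: "q \<in> M0" and e: "rep A a (0, sq_map (A 0) p) = rep A a (0, sq_map (A 0) q)"
    have "rho A a (rep A a (0, sq_map (A 0) p)) (rep A a (0, sq_map (A 0) q)) = 0"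
      using e rho_refl rep_props[OF S_in_U[of q 0]] q by simp
    then have "\<bar>fst p - fst q\<bar> + \<bar>snd p - snd q\<bar> \<le> 0" using A6 p q by force
    then have "fst p = fst q" "snd p = snd q" by (smt (verit))+
    then show "p = q" by (simp add: prod_eq_iff)
  qed
  have A5: "\<forall>i\<in>{0, 1}. \<forall>r\<in>{0..1}. \<forall>s\<in>{0..1}.
     rho A a (rep A a (0, sq_map (A 0) (i, r))) (rep A a (0, sq_map (A 0) (i, s))) = \<bar>s - r\<bar> \<and>
     rho A a (rep A a (0, sq_map (A 0) (r, i))) (rep A a (0, sq_map (A 0) (s, i))) = \<bar>s - r\<bar>"
  proof (intro ballI conjI)
    fix i r s :: real assume i: "i \<in> {0, 1}" and r: "r \<in> {0..1}" and s: "s \<in> {0..1}"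
    have M1: "(i, t) \<in> M0" "(t, i) \<in> M0" if "t \<in> {0..1}" for t using i that by (auto simp: M0_iff)
    show "rho A a (rep A a (0, sq_map (A 0) (i, r))) (rep A a (0, sq_map (A 0) (i, s))) = \<bar>s - r\<bar>"
      by (rule rS[OF M1(1)[OF r] M1(1)[OF s]]) (rule sq1a[OF chA i r s])
    show "rho A a (rep A a (0, sq_map (A 0) (r, i))) (rep A a (0, sq_map (A 0) (s, i))) = \<bar>s - r\<bar>"
      by (rule rS[OF M1(2)[OF r] M1(2)[OF s]]) (rule sq1b[OF chA i r s])
  qed
  show ?thesis unfolding is_sqms_def[of "Lsp A a"] Let_def Lsp_sel
    by (intro conjI; fact)
qed

theorem Lsp_cocone: "sq_cocone A a (Lsp A a) (\<lambda>k x. rep A a (k, x))"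
  unfolding sq_cocone_def
proof (intro conjI allI impI ballI)
  show "is_sqms (Lsp A a)" by (rule Lsp_sqms)
next
  fix k
  show "sq_hom (A k) (Lsp A a) (\<lambda>x. rep A a (k, x))" unfolding sq_hom_def Lsp_sel
  proof (intro conjI ballI subsetI)
    fix y assume "y \<in> (\<lambda>x. rep A a (k, x)) ` sq_carrier (A k)"
    then show "y \<in> rep A a ` Ucar A" by auto
  next
    fix x y assume x: "x \<in> sq_carrier (A k)" and y: "y \<in> sq_carrier (A k)"
    have "rho A a (rep A a (k, x)) (rep A a (k, y)) = rho A a (k, x) (k, y)" using rho_rep x y by simp
    also have "\<dots> \<le> dj A a k (k, x) (k, y)" using x y by (intro rho_le) auto
    also have "\<dots> = sq_dist (A k) x y" unfolding dj_def using chid x y by simp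
    finally show "rho A a (rep A a (k, x)) (rep A a (k, y)) \<le> sq_dist (A k) x y" .
  next
    fix p assume p: "p \<in> M0"
    have "rho A a (k, sq_map (A k) p) (0, sq_map (A 0) p) \<le> dj A a k (k, sq_map (A k) p) (0, sq_map (A 0) p)"
      using S_in_U[OF p] by (intro rho_le) auto
    also have "\<dots> = 0" unfolding dj_def using chid[OF sq_map_in[OF chA p]] sq_homD(3)[OF chhom[of 0 k] p]
      sq_zero[OF chA sq_map_in[OF chA p]] by simp
    finally have "rho A a (k, sq_map (A k) p) (0, sq_map (A 0) p) = 0"
      using rho_nonneg[OF S_in_U[OF p] S_in_U[OF p]] by (meson antisym)
    then show "rep A a (k, sq_map (A k) p) = rep A a (0, sq_map (A 0) p)"
      by (rule rep_eq[OF S_in_U[OF p] S_in_U[OF p]])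
  qed
next
  fix k l x assume kl: "k \<le> l" and x: "x \<in> sq_carrier (A k)"
  have ax: "a k l x \<in> sq_carrier (A l)" by (rule chin[OF kl x])
  have "rho A a (l, a k l x) (k, x) \<le> dj A a l (l, a k l x) (k, x)" using ax x kl by (intro rho_le) auto
  also have "\<dots> = 0" unfolding dj_def using chid[OF ax] sq_zero[OF chA ax] by simp
  finally have "rho A a (l, a k l x) (k, x) = 0" using rho_nonneg[of "(l, a k l x)" "(k, x)"] ax x by force
  then show "rep A a (l, a k l x) = rep A a (k, x)" using rep_eq[of "(l, a k l x)" "(k, x)"] ax x by auto
qed

end

section \<open>Product with an interval, and transport along injections\<close>

definition prodI :: "'x sqms \<Rightarrow> ('x \<times> real) sqms" where
  "prodI X = \<lparr>sq_carrier = sq_carrier X \<times> {0..2}, sq_dist = (\<lambda>u v. max (sq_dist X (fst u) (fst v)) \<bar>snd u - snd v\<bar>),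
     sq_map = (\<lambda>p. (sq_map X p, 0))\<rparr>"

lemma prodI_sel[simp]: "sq_carrier (prodI X) = sq_carrier X \<times> {0..2}"
  "sq_dist (prodI X) = (\<lambda>u v. max (sq_dist X (fst u) (fst v)) \<bar>snd u - snd v\<bar>)"
  "sq_map (prodI X) = (\<lambda>p. (sq_map X p, 0))"
  unfolding prodI_def by simp_all

lemma prodI_sqms: assumes X: "is_sqms X" shows "is_sqms (prodI X)"
proof -
  have A1: "\<forall>u\<in>sq_carrier X \<times> {0..2::real}. \<forall>v\<in>sq_carrier X \<times> {0..2::real}.
      0 \<le> max (sq_dist X (fst u) (fst v)) \<bar>snd u - snd v\<bar> \<and> max (sq_dist X (fst u) (fst v)) \<bar>snd u - snd v\<bar> \<le> 2 \<and>
      (max (sq_dist X (fst u) (fst v)) \<bar>snd u - snd v\<bar> = 0 \<longleftrightarrow> u = v) \<and>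
      max (sq_dist X (fst u) (fst v)) \<bar>snd u - snd v\<bar> = max (sq_dist X (fst v) (fst u)) \<bar>snd v - snd u\<bar>"
  proof (intro ballI)
    fix u v assume u: "u \<in> sq_carrier X \<times> {0..2::real}" and v: "v \<in> sq_carrier X \<times> {0..2::real}"
    have a: "fst u \<in> sq_carrier X" "fst v \<in> sq_carrier X" using u v by auto
    have "max (sq_dist X (fst u) (fst v)) \<bar>snd u - snd v\<bar> = 0 \<longleftrightarrow> u = v"
      using sq_zero_iff[OF X a] sq_nonneg[OF X a] by (auto simp: prod_eq_iff max_def)
    then show "0 \<le> max (sq_dist X (fst u) (fst v)) \<bar>snd u - snd v\<bar> \<and> max (sq_dist X (fst u) (fst v)) \<bar>snd u - snd v\<bar> \<le> 2 \<and>
      (max (sq_dist X (fst u) (fst v)) \<bar>snd u - snd v\<bar> = 0 \<longleftrightarrow> u = v) \<and>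
      max (sq_dist X (fst u) (fst v)) \<bar>snd u - snd v\<bar> = max (sq_dist X (fst v) (fst u)) \<bar>snd v - snd u\<bar>"
      using sq_nonneg[OF X a] sq_le2[OF X a] sq_sym[OF X a] u v by auto
  qed
  have A2: "\<forall>u\<in>sq_carrier X \<times> {0..2::real}. \<forall>v\<in>sq_carrier X \<times> {0..2::real}. \<forall>w\<in>sq_carrier X \<times> {0..2::real}.
      max (sq_dist X (fst u) (fst w)) \<bar>snd u - snd w\<bar> \<le> max (sq_dist X (fst u) (fst v)) \<bar>snd u - snd v\<bar> + max (sq_dist X (fst v) (fst w)) \<bar>snd v - snd w\<bar>"
  proof (intro ballI)
    fix u v w assume "u \<in> sq_carrier X \<times> {0..2::real}" "v \<in> sq_carrier X \<times> {0..2::real}" "w \<in> sq_carrier X \<times> {0..2::real}"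
    then have a: "fst u \<in> sq_carrier X" "fst v \<in> sq_carrier X" "fst w \<in> sq_carrier X" by auto
    show "max (sq_dist X (fst u) (fst w)) \<bar>snd u - snd w\<bar> \<le> max (sq_dist X (fst u) (fst v)) \<bar>snd u - snd v\<bar> + max (sq_dist X (fst v) (fst w)) \<bar>snd v - snd w\<bar>"
      using sq_tri[OF X a] sq_nonneg[OF X a(1,2)] sq_nonneg[OF X a(2,3)] by (auto simp: max_def)
  qed
  have A3: "(\<lambda>p. (sq_map X p, 0::real)) ` M0 \<subseteq> sq_carrier X \<times> {0..2::real}" using sq_map_in[OF X] by auto
  have A4: "inj_on (\<lambda>p. (sq_map X p, 0::real)) M0" using sq_inj[OF X] unfolding inj_on_def by auto
  have nn: "\<And>p q. p \<in> M0 \<Longrightarrow> q \<in> M0 \<Longrightarrow> max (sq_dist X (sq_map X p) (sq_map X q)) \<bar>0 - 0\<bar> = sq_dist X (sq_map X p) (sq_map X q)"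
    using sq_nonneg[OF X sq_map_in[OF X] sq_map_in[OF X]] by simp
  have M1: "(i, t) \<in> M0" "(t, i) \<in> M0" if "i \<in> {0,1}" "t \<in> {0..1}" for i t :: real using that by (auto simp: M0_iff)
  have A5: "\<forall>i\<in>{0, 1}. \<forall>r\<in>{0..1}. \<forall>s\<in>{0..1}.
      max (sq_dist X (fst (sq_map X (i, r), 0::real)) (fst (sq_map X (i, s), 0::real))) \<bar>snd (sq_map X (i, r), 0::real) - snd (sq_map X (i, s), 0::real)\<bar> = \<bar>s - r\<bar> \<and>
      max (sq_dist X (fst (sq_map X (r, i), 0::real)) (fst (sq_map X (s, i), 0::real))) \<bar>snd (sq_map X (r, i), 0::real) - snd (sq_map X (s, i), 0::real)\<bar> = \<bar>s - r\<bar>"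
    using nn M1 sq1a[OF X] sq1b[OF X] by simp
  have A6: "\<forall>p\<in>M0. \<forall>q\<in>M0. max (sq_dist X (fst (sq_map X p, 0::real)) (fst (sq_map X q, 0::real))) \<bar>snd (sq_map X p, 0::real) - snd (sq_map X q, 0::real)\<bar>
       \<ge> \<bar>fst p - fst q\<bar> + \<bar>snd p - snd q\<bar>"
    using nn sq2[OF X] by simp
  show ?thesis unfolding is_sqms_def[of "prodI X"] Let_def prodI_sel
    by (intro conjI; fact)
qed

definition transp :: "('x \<Rightarrow> 'y) \<Rightarrow> 'x sqms \<Rightarrow> 'y sqms" where
  "transp e X = \<lparr>sq_carrier = e ` sq_carrier X,
     sq_dist = (\<lambda>u v. sq_dist X (inv_into (sq_carrier X) e u) (inv_into (sq_carrier X) e v)),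
     sq_map = (\<lambda>p. e (sq_map X p))\<rparr>"

lemma transp_sel[simp]: "sq_carrier (transp e X) = e ` sq_carrier X"
  "sq_dist (transp e X) = (\<lambda>u v. sq_dist X (inv_into (sq_carrier X) e u) (inv_into (sq_carrier X) e v))"
  "sq_map (transp e X) = (\<lambda>p. e (sq_map X p))"
  unfolding transp_def by simp_all

lemma transp_sqms: assumes X: "is_sqms X" and e: "inj_on e (sq_carrier X)" shows "is_sqms (transp e X)"
proof -
  let ?i = "inv_into (sq_carrier X) e"
  have ii: "?i (e x) = x" if "x \<in> sq_carrier X" for x using inv_into_f_f[OF e that] .
  have A1: "\<forall>u\<in>e ` sq_carrier X. \<forall>v\<in>e ` sq_carrier X. 0 \<le> sq_dist X (?i u) (?i v) \<and> sq_dist X (?i u) (?i v) \<le> 2 \<and>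
      (sq_dist X (?i u) (?i v) = 0 \<longleftrightarrow> u = v) \<and> sq_dist X (?i u) (?i v) = sq_dist X (?i v) (?i u)"
    using sq_nonneg[OF X] sq_le2[OF X] sq_zero_iff[OF X] sq_sym[OF X] ii e[unfolded inj_on_def] by auto
  have A2: "\<forall>u\<in>e ` sq_carrier X. \<forall>v\<in>e ` sq_carrier X. \<forall>w\<in>e ` sq_carrier X. sq_dist X (?i u) (?i w) \<le> sq_dist X (?i u) (?i v) + sq_dist X (?i v) (?i w)"
    using sq_tri[OF X] ii by auto
  have A3: "(\<lambda>p. e (sq_map X p)) ` M0 \<subseteq> e ` sq_carrier X" using sq_map_in[OF X] by auto
  have A4: "inj_on (\<lambda>p. e (sq_map X p)) M0"
    using sq_inj[OF X] e sq_map_in[OF X] unfolding inj_on_def by metis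
  have A5: "\<forall>i\<in>{0, 1}. \<forall>r\<in>{0..1}. \<forall>s\<in>{0..1}.
      sq_dist X (?i (e (sq_map X (i, r)))) (?i (e (sq_map X (i, s)))) = \<bar>s - r\<bar> \<and>
      sq_dist X (?i (e (sq_map X (r, i)))) (?i (e (sq_map X (s, i)))) = \<bar>s - r\<bar>"
  proof (intro ballI conjI)
    fix i r s :: real assume i: "i \<in> {0, 1}" and r: "r \<in> {0..1}" and s: "s \<in> {0..1}"
    have M1: "(i, t) \<in> M0" "(t, i) \<in> M0" if "t \<in> {0..1}" for t using i that by (auto simp: M0_iff)
    show "sq_dist X (?i (e (sq_map X (i, r)))) (?i (e (sq_map X (i, s)))) = \<bar>s - r\<bar>"
      using ii[OF sq_map_in[OF X M1(1)[OF r]]] ii[OF sq_map_in[OF X M1(1)[OF s]]] sq1a[OF X i r s] by simp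
    show "sq_dist X (?i (e (sq_map X (r, i)))) (?i (e (sq_map X (s, i)))) = \<bar>s - r\<bar>"
      using ii[OF sq_map_in[OF X M1(2)[OF r]]] ii[OF sq_map_in[OF X M1(2)[OF s]]] sq1b[OF X i r s] by simp
  qed
  have A6: "\<forall>p\<in>M0. \<forall>q\<in>M0. sq_dist X (?i (e (sq_map X p))) (?i (e (sq_map X q))) \<ge> \<bar>fst p - fst q\<bar> + \<bar>snd p - snd q\<bar>"
    using sq2[OF X] ii sq_map_in[OF X] by simp
  show ?thesis unfolding is_sqms_def[of "transp e X"] Let_def transp_sel
    by (intro conjI; fact)
qed

lemma transp_hom: assumes f: "sq_hom Z X f" and e: "inj_on e (sq_carrier X)"
  shows "sq_hom Z (transp e X) (\<lambda>z. e (f z))"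
  unfolding sq_hom_def transp_sel
  using sq_homD[OF f] inv_into_f_f[OF e] by auto



lemma prodI_hom: assumes f: "sq_hom Z X f"
  and pr: "\<And>z. z \<in> sq_carrier Z \<Longrightarrow> 0 \<le> \<psi> z \<and> \<psi> z \<le> 2"
  and pl: "\<And>z w. z \<in> sq_carrier Z \<Longrightarrow> w \<in> sq_carrier Z \<Longrightarrow> \<bar>\<psi> z - \<psi> w\<bar> \<le> sq_dist Z z w"
  and p0: "\<And>p. p \<in> M0 \<Longrightarrow> \<psi> (sq_map Z p) = 0"
  shows "sq_hom Z (prodI X) (\<lambda>z. (f z, \<psi> z))"
  unfolding sq_hom_def prodI_sel
proof (intro conjI ballI subsetI)
  fix y assume "y \<in> (\<lambda>z. (f z, \<psi> z)) ` sq_carrier Z"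
  then obtain z where z: "z \<in> sq_carrier Z" and y: "y = (f z, \<psi> z)" by blast
  show "y \<in> sq_carrier X \<times> {0..2}" using y sq_homD(1)[OF f z] pr[OF z] by simp
next
  fix z w assume z: "z \<in> sq_carrier Z" and w: "w \<in> sq_carrier Z"
  show "max (sq_dist X (fst (f z, \<psi> z)) (fst (f w, \<psi> w))) \<bar>snd (f z, \<psi> z) - snd (f w, \<psi> w)\<bar> \<le> sq_dist Z z w"
    using sq_homD(2)[OF f z w] pl[OF z w] by simp
next
  fix p assume p: "p \<in> M0"
  show "(f (sq_map Z p), \<psi> (sq_map Z p)) = (sq_map X p, 0)" using sq_homD(3)[OF f p] p0[OF p] by simp
qed

lemma infinite_a:
  assumes X: "is_sqms (X :: 'a sqms)"
  shows "infinite (UNIV :: 'a set)"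
proof
  assume fin: "finite (UNIV :: 'a set)"
  have sub: "(\<lambda>t. (0::real, t)) ` {0..1} \<subseteq> M0" unfolding M0_def by auto
  have inj: "inj_on (\<lambda>t. (0::real, t)) {0..1::real}" unfolding inj_on_def by simp
  have i01: "infinite {0..1::real}" by (rule infinite_Icc) simp
  have "infinite ((\<lambda>t. (0::real, t)) ` {0..1::real})"
    using finite_imageD[OF _ inj] i01 by blast
  then have inf: "infinite M0" by (rule infinite_super[OF sub])
  have "finite (sq_map X ` M0)" by (rule finite_subset[OF subset_UNIV fin])
  then have "finite M0" by (rule finite_imageD[OF _ sq_inj[OF X]])
  then show False using inf by contradiction
qed

lemma pairing_ex:
  assumes "infinite (UNIV :: 'a set)"
  shows "\<exists>pr :: 'a \<times> 'a \<Rightarrow> 'a. inj pr"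
proof -
  have "\<exists>f. bij_betw f ((UNIV :: 'a set) \<times> (UNIV :: 'a set)) (UNIV :: 'a set)"
    by (rule card_of_ordIso[THEN iffD2, OF card_of_Times_same_infinite[OF assms]])
  then obtain f where "bij_betw f ((UNIV :: 'a set) \<times> (UNIV :: 'a set)) (UNIV :: 'a set)" ..
  then have "inj f" unfolding bij_betw_def by simp
  then show ?thesis by blast
qed



definition Cov :: "(nat \<Rightarrow> 'a sqms) \<Rightarrow> (nat \<Rightarrow> 'a \<Rightarrow> 'c) \<Rightarrow> 'c set" where
  "Cov A c = {c k x | k x. x \<in> sq_carrier (A k)}"

definition psi :: "'c sqms \<Rightarrow> 'c set \<Rightarrow> 'c \<Rightarrow> real" where
  "psi C V y = min 2 (Inf ((\<lambda>v. sq_dist C y v) ` V))"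

context
  fixes A :: "nat \<Rightarrow> 'a sqms" and a :: "nat \<Rightarrow> nat \<Rightarrow> 'a \<Rightarrow> 'a"
    and C :: "'c sqms" and c :: "nat \<Rightarrow> 'a \<Rightarrow> 'c"
  assumes ch: "sq_chain A a" and col: "sq_colimit TYPE(nat \<times> 'a) A a C c"
begin

lemma Ccoc: "sq_cocone A a C c" using col unfolding sq_colimit_def by blast
lemma Csq: "is_sqms C" using Ccoc unfolding sq_cocone_def by blast
lemma chom: "sq_hom (A k) C (c k)" using Ccoc unfolding sq_cocone_def by blast
lemma ccompat: "k \<le> l \<Longrightarrow> x \<in> sq_carrier (A k) \<Longrightarrow> c l (a k l x) = c k x" using Ccoc unfolding sq_cocone_def by blast
lemma cin: "x \<in> sq_carrier (A k) \<Longrightarrow> c k x \<in> sq_carrier C" using sq_homD(1)[OF chom] .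

lemma col_ex: "sq_cocone A a (D :: (nat \<times> 'a) sqms) g \<Longrightarrow>
   \<exists>h. sq_hom C D h \<and> (\<forall>k. \<forall>x\<in>sq_carrier (A k). h (c k x) = g k x)"
  using col unfolding sq_colimit_def by blast

lemma col_uniq: "sq_cocone A a (D :: (nat \<times> 'a) sqms) g \<Longrightarrow>
   sq_hom C D h \<Longrightarrow> (\<forall>k. \<forall>x\<in>sq_carrier (A k). h (c k x) = g k x) \<Longrightarrow>
   sq_hom C D h' \<Longrightarrow> (\<forall>k. \<forall>x\<in>sq_carrier (A k). h' (c k x) = g k x) \<Longrightarrow>
   y \<in> sq_carrier C \<Longrightarrow> h y = h' y"
  using col unfolding sq_colimit_def by blast

lemma h0_ex: "\<exists>h0. sq_hom C (Lsp A a) h0 \<and> (\<forall>k. \<forall>x\<in>sq_carrier (A k). h0 (c k x) = rep A a (k, x))"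
  using col_ex[OF Lsp_cocone[OF ch]] by blast

lemma C_le_rho:
  assumes x: "x \<in> sq_carrier (A k)" and y: "y \<in> sq_carrier (A l)"
  shows "sq_dist C (c k x) (c l y) \<le> rho A a (k, x) (l, y)"
proof (rule rho_ge[OF ch])
  fix j assume j: "fst (k, x) \<le> j" "fst (l, y) \<le> j"
  then have "c k x = c j (a k j x)" "c l y = c j (a l j y)" using ccompat x y by auto
  then show "sq_dist C (c k x) (c l y) \<le> dj A a j (k, x) (l, y)" unfolding dj_def
    using sq_homD(2)[OF chom chin[OF ch] chin[OF ch]] j x y by simp
qed

lemma rho_le_C:
  assumes x: "x \<in> sq_carrier (A k)" and y: "y \<in> sq_carrier (A l)"
  shows "rho A a (k, x) (l, y) \<le> sq_dist C (c k x) (c l y)"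
proof -
  obtain h0 where h0: "sq_hom C (Lsp A a) h0" "\<forall>k. \<forall>x\<in>sq_carrier (A k). h0 (c k x) = rep A a (k, x)"
    using h0_ex by blast
  have "rho A a (k, x) (l, y) = rho A a (rep A a (k, x)) (rep A a (l, y))" using rho_rep[OF ch] x y by simp
  also have "\<dots> = sq_dist (Lsp A a) (h0 (c k x)) (h0 (c l y))" using h0(2) x y by simp
  also have "\<dots> \<le> sq_dist C (c k x) (c l y)" by (rule sq_homD(2)[OF h0(1) cin[OF x] cin[OF y]])
  finally show ?thesis .
qed

lemma C_rho: "x \<in> sq_carrier (A k) \<Longrightarrow> y \<in> sq_carrier (A l) \<Longrightarrow> sq_dist C (c k x) (c l y) = rho A a (k, x) (l, y)"
  using C_le_rho rho_le_C by (meson antisym)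

lemma C_approx:
  assumes x: "x \<in> sq_carrier (A k)" and y: "y \<in> sq_carrier (A l)" and e: "0 < \<epsilon>"
  shows "\<exists>j. k \<le> j \<and> l \<le> j \<and> sq_dist (A j) (a k j x) (a l j y) < sq_dist C (c k x) (c l y) + \<epsilon>"
  using rho_approx[OF ch, of "(k, x)" "(l, y)" \<epsilon>] x y e C_rho[OF x y] unfolding dj_def by auto

lemma Cov_ne: "Cov A c \<noteq> {}"
  unfolding Cov_def using sq_map_in[OF chA[OF ch] M0_ne, of 0] by blast

lemma Cov_sub: "Cov A c \<subseteq> sq_carrier C"
  unfolding Cov_def using cin by blast

lemma inf_bdd: "y \<in> sq_carrier C \<Longrightarrow> bdd_below ((\<lambda>v. sq_dist C y v) ` Cov A c)"
  unfolding bdd_below_def using sq_nonneg[OF Csq] Cov_sub by blast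

lemma inf_nonneg: "y \<in> sq_carrier C \<Longrightarrow> 0 \<le> Inf ((\<lambda>v. sq_dist C y v) ` Cov A c)"
  using Cov_ne sq_nonneg[OF Csq] Cov_sub by (intro cInf_greatest) auto

lemma inf_lip:
  assumes y: "y \<in> sq_carrier C" and y': "y' \<in> sq_carrier C"
  shows "Inf ((\<lambda>v. sq_dist C y v) ` Cov A c) \<le> sq_dist C y y' + Inf ((\<lambda>v. sq_dist C y' v) ` Cov A c)"
proof -
  have "Inf ((\<lambda>v. sq_dist C y v) ` Cov A c) - sq_dist C y y' \<le> Inf ((\<lambda>v. sq_dist C y' v) ` Cov A c)"
  proof (rule cInf_greatest)
    show "(\<lambda>v. sq_dist C y' v) ` Cov A c \<noteq> {}" using Cov_ne by blast
  next
    fix r assume "r \<in> (\<lambda>v. sq_dist C y' v) ` Cov A c"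
    then obtain v where v: "v \<in> Cov A c" and r: "r = sq_dist C y' v" by blast
    have vc: "v \<in> sq_carrier C" using v Cov_sub by blast
    have "Inf ((\<lambda>v. sq_dist C y v) ` Cov A c) \<le> sq_dist C y v"
      by (rule cInf_lower) (use v inf_bdd[OF y] in auto)
    also have "\<dots> \<le> sq_dist C y y' + sq_dist C y' v" by (rule sq_tri[OF Csq y y' vc])
    finally show "Inf ((\<lambda>v. sq_dist C y v) ` Cov A c) - sq_dist C y y' \<le> r" using r by simp
  qed
  then show ?thesis by simp
qed

lemma psi_props:
  "y \<in> sq_carrier C \<Longrightarrow> 0 \<le> psi C (Cov A c) y \<and> psi C (Cov A c) y \<le> 2"
  "y \<in> sq_carrier C \<Longrightarrow> y' \<in> sq_carrier C \<Longrightarrow> \<bar>psi C (Cov A c) y - psi C (Cov A c) y'\<bar> \<le> sq_dist C y y'"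
  "v \<in> Cov A c \<Longrightarrow> psi C (Cov A c) v = 0"
proof -
  assume y: "y \<in> sq_carrier C"
  show "0 \<le> psi C (Cov A c) y \<and> psi C (Cov A c) y \<le> 2" unfolding psi_def using inf_nonneg[OF y] by simp
next
  assume y: "y \<in> sq_carrier C" and y': "y' \<in> sq_carrier C"
  have "Inf ((\<lambda>v. sq_dist C y v) ` Cov A c) \<le> sq_dist C y y' + Inf ((\<lambda>v. sq_dist C y' v) ` Cov A c)"
    by (rule inf_lip[OF y y'])
  moreover have "Inf ((\<lambda>v. sq_dist C y' v) ` Cov A c) \<le> sq_dist C y' y + Inf ((\<lambda>v. sq_dist C y v) ` Cov A c)"
    by (rule inf_lip[OF y' y])
  moreover have "sq_dist C y' y = sq_dist C y y'" by (rule sq_sym[OF Csq y' y])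
  ultimately show "\<bar>psi C (Cov A c) y - psi C (Cov A c) y'\<bar> \<le> sq_dist C y y'"
    unfolding psi_def by (auto simp: min_def)
next
  assume v: "v \<in> Cov A c"
  have vc: "v \<in> sq_carrier C" using v Cov_sub by blast
  have "Inf ((\<lambda>w. sq_dist C v w) ` Cov A c) \<le> sq_dist C v v"
    by (rule cInf_lower) (use v inf_bdd[OF vc] in auto)
  then have "Inf ((\<lambda>w. sq_dist C v w) ` Cov A c) = 0" using inf_nonneg[OF vc] sq_zero[OF Csq vc] by simp
  then show "psi C (Cov A c) v = 0" unfolding psi_def by simp
qed

lemma S_Cov: "p \<in> M0 \<Longrightarrow> sq_map C p \<in> Cov A c"
  unfolding Cov_def using sq_homD(3)[OF chom, of p 0] sq_map_in[OF chA[OF ch], of p 0] by force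

theorem coverage:
  assumes y: "y \<in> sq_carrier C"
  shows "\<exists>k x. x \<in> sq_carrier (A k) \<and> y = c k x"
proof -
  let ?L = "Lsp A a"
  obtain h0 where h0: "sq_hom C ?L h0" "\<forall>k. \<forall>x\<in>sq_carrier (A k). h0 (c k x) = rep A a (k, x)"
    using h0_ex by blast
  have Lsq: "is_sqms ?L" by (rule Lsp_sqms[OF ch])
  obtain pr :: "'a \<times> 'a \<Rightarrow> 'a" where pr: "inj pr" using pairing_ex[OF infinite_a[OF chA[OF ch]]] by blast
  define rt where "rt t = sq_map (A 0) (0, t / 2)" for t :: real
  have rt: "inj_on rt {0..2}"
  proof (rule inj_onI)
    fix s t :: real assume s: "s \<in> {0..2}" and t: "t \<in> {0..2}" and e: "rt s = rt t"
    have "(0::real, s / 2) \<in> M0" "(0::real, t / 2) \<in> M0" using s t by (auto simp: M0_iff)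
    then have "(0::real, s / 2) = (0, t / 2)" using inj_onD[OF sq_inj[OF chA[OF ch]]] e unfolding rt_def by blast
    then show "s = t" by simp
  qed
  define e where "e u = (fst (fst u), pr (snd (fst u), rt (snd u)))" for u :: "(nat \<times> 'a) \<times> real"
  have einj: "inj_on e (UNIV \<times> {0..2})"
  proof (rule inj_onI)
    fix u v assume u: "u \<in> UNIV \<times> {0..2}" and v: "v \<in> UNIV \<times> {0..2}" and ee: "e u = e v"
    have 1: "fst (fst u) = fst (fst v)" and 2: "pr (snd (fst u), rt (snd u)) = pr (snd (fst v), rt (snd v))"
      using ee unfolding e_def by auto
    from 2 have "snd (fst u) = snd (fst v)" "rt (snd u) = rt (snd v)" using injD[OF pr] by auto
    moreover have "snd u = snd v" using inj_onD[OF rt] u v \<open>rt (snd u) = rt (snd v)\<close> by auto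
    ultimately show "u = v" using 1 by (simp add: prod_eq_iff)
  qed
  have einjP: "inj_on e (sq_carrier (prodI ?L))" using einj by (rule inj_on_subset) auto
  define D where "D = transp e (prodI ?L)"
  have Dsq: "is_sqms D" unfolding D_def by (rule transp_sqms[OF prodI_sqms[OF Lsq] einjP])
  define g where "g k x = e (rep A a (k, x), 0)" for k x
  have Lcoc: "sq_cocone A a ?L (\<lambda>k x. rep A a (k, x))" by (rule Lsp_cocone[OF ch])
  have ghom: "sq_hom (A k) D (g k)" for k
  proof -
    have "sq_hom (A k) ?L (\<lambda>x. rep A a (k, x))" using Lcoc unfolding sq_cocone_def by blast
    then have "sq_hom (A k) (prodI ?L) (\<lambda>x. (rep A a (k, x), 0))"
      by (rule prodI_hom[where \<psi>="\<lambda>_. 0", simplified]) (use sq_nonneg[OF chA[OF ch]] in auto)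
    then show ?thesis unfolding D_def g_def by (rule transp_hom[OF _ einjP])
  qed
  have Dcoc: "sq_cocone A a D g" unfolding sq_cocone_def
    using Dsq ghom Lcoc unfolding sq_cocone_def g_def by auto
  define h1 where "h1 y = e (h0 y, 0)" for y
  define h2 where "h2 y = e (h0 y, psi C (Cov A c) y)" for y
  have h1hom: "sq_hom C D h1"
  proof -
    have "sq_hom C (prodI ?L) (\<lambda>y. (h0 y, 0))" by (rule prodI_hom[where \<psi>="\<lambda>_. 0", simplified, OF h0(1)]) (use sq_nonneg[OF Csq] in auto)
    then show ?thesis unfolding D_def h1_def by (rule transp_hom[OF _ einjP])
  qed
  have h2hom: "sq_hom C D h2"
  proof -
    have "sq_hom C (prodI ?L) (\<lambda>y. (h0 y, psi C (Cov A c) y))"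
      by (rule prodI_hom[OF h0(1)]) (use psi_props S_Cov in auto)
    then show ?thesis unfolding D_def h2_def by (rule transp_hom[OF _ einjP])
  qed
  have h1c: "\<forall>k. \<forall>x\<in>sq_carrier (A k). h1 (c k x) = g k x" using h0(2) unfolding h1_def g_def by simp
  have h2c: "\<forall>k. \<forall>x\<in>sq_carrier (A k). h2 (c k x) = g k x"
  proof (intro allI ballI)
    fix k x assume x: "x \<in> sq_carrier (A k)"
    have "c k x \<in> Cov A c" unfolding Cov_def using x by blast
    then show "h2 (c k x) = g k x" using psi_props(3) h0(2) x unfolding h2_def g_def by simp
  qed
  have "h1 y = h2 y" by (rule col_uniq[OF Dcoc h1hom h1c h2hom h2c y])
  then have "psi C (Cov A c) y = 0"
    using inj_onD[OF einj, of "(h0 y, 0)" "(h0 y, psi C (Cov A c) y)"] psi_props(1)[OF y]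
    unfolding h1_def h2_def by auto
  then have I0: "Inf ((\<lambda>v. sq_dist C y v) ` Cov A c) = 0" unfolding psi_def by (auto simp: min_def split: if_splits)
  have h0y: "h0 y \<in> rep A a ` Ucar A" using sq_homD(1)[OF h0(1) y] by simp
  then obtain j x0 where x0: "x0 \<in> sq_carrier (A j)" and hy: "h0 y = rep A a (j, x0)" by (auto simp: Ucar_def)
  have "sq_dist C y (c j x0) \<le> 0"
  proof (rule field_le_epsilon)
    fix \<epsilon> :: real assume eps: "0 < \<epsilon>"
    have "Inf ((\<lambda>v. sq_dist C y v) ` Cov A c) < \<epsilon> / 2" using I0 eps by simp
    then have "\<exists>r\<in>(\<lambda>v. sq_dist C y v) ` Cov A c. r < \<epsilon> / 2"
      using cInf_less_iff[of "(\<lambda>v. sq_dist C y v) ` Cov A c"] Cov_ne inf_bdd[OF y] by blast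
    then obtain v where v: "v \<in> Cov A c" and dv: "sq_dist C y v < \<epsilon> / 2" by blast
    from v obtain k x where x: "x \<in> sq_carrier (A k)" and vv: "v = c k x" unfolding Cov_def by blast
    have vc: "v \<in> sq_carrier C" using cin[OF x] vv by simp
    have "sq_dist C v (c j x0) = rho A a (k, x) (j, x0)" using C_rho[OF x x0] vv by simp
    also have "\<dots> = rho A a (rep A a (k, x)) (rep A a (j, x0))" using rho_rep[OF ch] x x0 by simp
    also have "\<dots> = sq_dist ?L (h0 v) (h0 y)" using hy h0(2) x vv by simp
    also have "\<dots> \<le> sq_dist C v y" by (rule sq_homD(2)[OF h0(1) vc y])
    also have "\<dots> = sq_dist C y v" by (rule sq_sym[OF Csq vc y])
    finally have "sq_dist C v (c j x0) < \<epsilon> / 2" using dv by simp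
    moreover have "sq_dist C y (c j x0) \<le> sq_dist C y v + sq_dist C v (c j x0)" by (rule sq_tri[OF Csq y vc cin[OF x0]])
    ultimately show "sq_dist C y (c j x0) \<le> 0 + \<epsilon>" using dv by simp
  qed
  then have "y = c j x0" using sq_zero_iff[OF Csq y cin[OF x0]] sq_nonneg[OF Csq y cin[OF x0]] by simp
  then show ?thesis using x0 by blast
qed

end



context
  fixes A :: "nat \<Rightarrow> 'a sqms" and a :: "nat \<Rightarrow> nat \<Rightarrow> 'a \<Rightarrow> 'a"
    and C :: "'c sqms" and c :: "nat \<Rightarrow> 'a \<Rightarrow> 'c"
  assumes ch: "sq_chain A a" and col: "sq_colimit TYPE(nat \<times> 'a) A a C c"
begin

lemma aS: "k \<le> l \<Longrightarrow> \<forall>p\<in>M0. a k l (sq_map (A k) p) = sq_map (A l) p"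
  using sq_homD(3)[OF chhom[OF ch]] by blast

lemma cS: "\<forall>p\<in>M0. c k (sq_map (A k) p) = sq_map C p"
  using sq_homD(3)[OF chom[OF ch col]] by blast

lemma tens_chain: "sq_chain (\<lambda>k. tens (A k)) (\<lambda>k l. tens_map (A k) (A l) (a k l))"
  unfolding sq_chain_def tens_sel
proof (intro conjI allI impI ballI)
  fix k show "is_sqms (tens (A k))" by (rule tens_sqms[OF chA[OF ch]])
next
  fix k l :: nat assume kl: "k \<le> l"
  show "sq_hom (tens (A k)) (tens (A l)) (tens_map (A k) (A l) (a k l))"
    by (rule tens_map_hom[OF chA[OF ch] chA[OF ch] chhom[OF ch kl]])
next
  fix k P assume P: "P \<in> tens_carrier (A k)"
  obtain m x where P': "P = tens_pt (A k) m x" "(m, x) \<in> Mset \<times> sq_carrier (A k)" using P by (rule tens_carrierE)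
  show "tens_map (A k) (A k) (a k k) P = P"
    unfolding P'(1) tens_map_pt[OF aS[OF order_refl] P'(2)] using chid[OF ch] P'(2) by simp
next
  fix k l m P assume kl: "k \<le> l" and lm: "l \<le> m" and P: "P \<in> tens_carrier (A k)"
  obtain n x where P': "P = tens_pt (A k) n x" "(n, x) \<in> Mset \<times> sq_carrier (A k)" using P by (rule tens_carrierE)
  have ax: "(n, a k l x) \<in> Mset \<times> sq_carrier (A l)" using P'(2) chin[OF ch kl] by auto
  show "tens_map (A l) (A m) (a l m) (tens_map (A k) (A l) (a k l) P) = tens_map (A k) (A m) (a k m) P"
    unfolding P'(1) tens_map_pt[OF aS[OF kl] P'(2)] tens_map_pt[OF aS[OF lm] ax]
      tens_map_pt[OF aS[OF order_trans[OF kl lm]] P'(2)]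
    using chcomp[OF ch kl lm] P'(2) by simp
qed

lemma tens_cocone: "sq_cocone (\<lambda>k. tens (A k)) (\<lambda>k l. tens_map (A k) (A l) (a k l)) (tens C) (\<lambda>k. tens_map (A k) C (c k))"
  unfolding sq_cocone_def tens_sel
proof (intro conjI allI impI ballI)
  show "is_sqms (tens C)" by (rule tens_sqms[OF Csq[OF ch col]])
next
  fix k show "sq_hom (tens (A k)) (tens C) (tens_map (A k) C (c k))"
    by (rule tens_map_hom[OF chA[OF ch] Csq[OF ch col] chom[OF ch col]])
next
  fix k l P assume kl: "k \<le> l" and P: "P \<in> tens_carrier (A k)"
  obtain n x where P': "P = tens_pt (A k) n x" "(n, x) \<in> Mset \<times> sq_carrier (A k)" using P by (rule tens_carrierE)
  have ax: "(n, a k l x) \<in> Mset \<times> sq_carrier (A l)" using P'(2) chin[OF ch kl] by auto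
  show "tens_map (A l) C (c l) (tens_map (A k) (A l) (a k l) P) = tens_map (A k) C (c k) P"
    unfolding P'(1) tens_map_pt[OF aS[OF kl] P'(2)] tens_map_pt[OF cS ax] tens_map_pt[OF cS P'(2)]
    using ccompat[OF ch col kl] P'(2) by simp
qed

context
  fixes D :: "'d sqms" and g :: "nat \<Rightarrow> ((nat \<times> nat) \<times> 'a) set \<Rightarrow> 'd"
  assumes coc: "sq_cocone (\<lambda>k. tens (A k)) (\<lambda>k l. tens_map (A k) (A l) (a k l)) D g"
begin

lemma Dsq: "is_sqms D" using coc unfolding sq_cocone_def by blast
lemma ghom: "sq_hom (tens (A k)) D (g k)" using coc unfolding sq_cocone_def by blast
lemma gcomp: "k \<le> l \<Longrightarrow> P \<in> tens_carrier (A k) \<Longrightarrow> g l (tens_map (A k) (A l) (a k l) P) = g k P"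
  using coc unfolding sq_cocone_def tens_sel by blast

lemma gin: "(m, x) \<in> Mset \<times> sq_carrier (A k) \<Longrightarrow> g k (tens_pt (A k) m x) \<in> sq_carrier D"
proof -
  assume mx: "(m, x) \<in> Mset \<times> sq_carrier (A k)"
  have "tens_pt (A k) m x \<in> sq_carrier (tens (A k))" using tens_carrierI[OF mx] by simp
  then show ?thesis by (rule sq_homD(1)[OF ghom])
qed

lemma glift: assumes kj: "k \<le> j" and mx: "(m, x) \<in> Mset \<times> sq_carrier (A k)"
  shows "g k (tens_pt (A k) m x) = g j (tens_pt (A j) m (a k j x))"
  using gcomp[OF kj tens_carrierI[OF mx]] tens_map_pt[OF aS[OF kj] mx] by simp

lemma key:
  assumes m: "m \<in> Mset" and x: "x \<in> sq_carrier (A k)" and x': "x' \<in> sq_carrier (A l)"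
  shows "sq_dist D (g k (tens_pt (A k) m x)) (g l (tens_pt (A l) m x')) \<le> sq_dist C (c k x) (c l x') / 3"
proof (rule field_le_epsilon)
  fix \<epsilon> :: real assume e: "0 < \<epsilon>"
  obtain j where j: "k \<le> j" "l \<le> j" and dj: "sq_dist (A j) (a k j x) (a l j x') < sq_dist C (c k x) (c l x') + 3 * \<epsilon>"
    using C_approx[OF ch col x x', of "3 * \<epsilon>"] e by auto
  have ax: "(m, a k j x) \<in> Mset \<times> sq_carrier (A j)" using m chin[OF ch j(1) x] by auto
  have ax': "(m, a l j x') \<in> Mset \<times> sq_carrier (A j)" using m chin[OF ch j(2) x'] by auto
  have "sq_dist D (g k (tens_pt (A k) m x)) (g l (tens_pt (A l) m x'))
      = sq_dist D (g j (tens_pt (A j) m (a k j x))) (g j (tens_pt (A j) m (a l j x')))"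
    using glift[OF j(1)] glift[OF j(2)] m x x' by simp
  also have "\<dots> \<le> tens_dist (A j) (tens_pt (A j) m (a k j x)) (tens_pt (A j) m (a l j x'))"
  proof -
    have "sq_dist D (g j (tens_pt (A j) m (a k j x))) (g j (tens_pt (A j) m (a l j x')))
       \<le> sq_dist (tens (A j)) (tens_pt (A j) m (a k j x)) (tens_pt (A j) m (a l j x'))"
      by (rule sq_homD(2)[OF ghom[of j]]) (simp_all add: tens_carrierI[OF ax] tens_carrierI[OF ax'])
    then show ?thesis by simp
  qed
  also have "\<dots> \<le> tens_cost (A j) (m, a k j x) (m, a l j x')" by (rule dist_le_cost[OF chA[OF ch] ax ax'])
  also have "\<dots> \<le> sq_dist (A j) (a k j x) (a l j x') / 3" using cost_same[OF chA[OF ch, of j], of "(m, a k j x)" "(m, a l j x')"] ax ax' by simp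
  finally show "sq_dist D (g k (tens_pt (A k) m x)) (g l (tens_pt (A l) m x')) \<le> sq_dist C (c k x) (c l x') / 3 + \<epsilon>"
    using dj by simp
qed

lemma key0:
  assumes m: "m \<in> Mset" and x: "x \<in> sq_carrier (A k)" and x': "x' \<in> sq_carrier (A l)" and e: "c k x = c l x'"
  shows "g k (tens_pt (A k) m x) = g l (tens_pt (A l) m x')"
proof -
  have "sq_dist D (g k (tens_pt (A k) m x)) (g l (tens_pt (A l) m x')) \<le> 0"
    using key[OF m x x'] e sq_zero[OF Csq[OF ch col] cin[OF ch col x']] by simp
  moreover have i1: "g k (tens_pt (A k) m x) \<in> sq_carrier D" using gin m x by simp
  moreover have i2: "g l (tens_pt (A l) m x') \<in> sq_carrier D" using gin m x' by simp
  ultimately show ?thesis using sq_zero_iff[OF Dsq i1 i2] sq_nonneg[OF Dsq i1 i2] by simp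
qed

definition kx :: "'c \<Rightarrow> nat \<times> 'a" where
  "kx y = (SOME z. snd z \<in> sq_carrier (A (fst z)) \<and> y = c (fst z) (snd z))"

lemma kx: "y \<in> sq_carrier C \<Longrightarrow> snd (kx y) \<in> sq_carrier (A (fst (kx y))) \<and> y = c (fst (kx y)) (snd (kx y))"
proof -
  assume y: "y \<in> sq_carrier C"
  obtain k x where "x \<in> sq_carrier (A k)" "y = c k x" using coverage[OF ch col y] by blast
  then have "\<exists>z. snd z \<in> sq_carrier (A (fst z)) \<and> y = c (fst z) (snd z)" by (intro exI[of _ "(k, x)"]) simp
  then show ?thesis unfolding kx_def by (rule someI_ex)
qed

definition F :: "(nat \<times> nat) \<times> 'c \<Rightarrow> 'd" where
  "F z = g (fst (kx (snd z))) (tens_pt (A (fst (kx (snd z)))) (fst z) (snd (kx (snd z))))"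

lemma F_in: "z \<in> Mset \<times> sq_carrier C \<Longrightarrow> F z \<in> sq_carrier D"
  unfolding F_def using gin kx by (cases z) auto

lemma F_eq: assumes m: "m \<in> Mset" and x: "x \<in> sq_carrier (A k)"
  shows "F (m, c k x) = g k (tens_pt (A k) m x)"
proof -
  have k: "snd (kx (c k x)) \<in> sq_carrier (A (fst (kx (c k x))))" "c k x = c (fst (kx (c k x))) (snd (kx (c k x)))"
    using kx[OF cin[OF ch col x]] by auto
  show ?thesis unfolding F_def using key0[OF m k(1) x] k(2) by simp
qed

lemma F_S: assumes m: "m \<in> Mset" and p: "p \<in> M0"
  shows "F (m, sq_map C p) = g 0 (tens_pt (A 0) m (sq_map (A 0) p))"
  using F_eq[OF m sq_map_in[OF chA[OF ch] p], of 0] cS p by simp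

lemma F_step: assumes z: "z \<in> Mset \<times> sq_carrier C" and w: "w \<in> Mset \<times> sq_carrier C"
  shows "sq_dist D (F z) (F w) \<le> tens_cost C z w"
proof (cases "(z, w) \<in> tens_rel C")
  case True
  have "F z = F w"
  proof -
    from rel_char[OF Csq[OF ch col] True] show ?thesis
    proof
      assume "z = w" then show ?thesis by simp
    next
      assume "\<exists>p q. p \<in> M0 \<and> q \<in> M0 \<and> snd z = sq_map C p \<and> snd w = sq_map C q \<and>
            fst z \<in> Mset \<and> fst w \<in> Mset \<and> pos (fst z) p = pos (fst w) q"
      then obtain p q where h: "p \<in> M0" "q \<in> M0" "snd z = sq_map C p" "snd w = sq_map C q"
        "fst z \<in> Mset" "fst w \<in> Mset" "pos (fst z) p = pos (fst w) q" by blast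
      have "tens_pt (A 0) (fst z) (sq_map (A 0) p) = tens_pt (A 0) (fst w) (sq_map (A 0) q)"
        by (rule pt_eq, rule pos_rel) (use h in auto)
      moreover have "z = (fst z, sq_map C p)" "w = (fst w, sq_map C q)" using h(3,4) by (simp_all add: prod_eq_iff)
      ultimately show ?thesis using F_S[OF h(5) h(1)] F_S[OF h(6) h(2)] by simp
    qed
  qed
  then show ?thesis using sq_zero[OF Dsq F_in[OF w]] cost_rel[OF True] by simp
next
  case nr: False
  show ?thesis
  proof (cases "fst z = fst w")
    case True
    obtain m y where zz: "z = (m, y)" by (cases z)
    obtain y' where ww: "w = (m, y')" using True zz by (cases w) auto
    have y: "y \<in> sq_carrier C" and y': "y' \<in> sq_carrier C" and m: "m \<in> Mset" using z w zz ww by auto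
    have k: "snd (kx y) \<in> sq_carrier (A (fst (kx y)))" "y = c (fst (kx y)) (snd (kx y))" using kx[OF y] by auto
    have k': "snd (kx y') \<in> sq_carrier (A (fst (kx y')))" "y' = c (fst (kx y')) (snd (kx y'))" using kx[OF y'] by auto
    have "sq_dist D (F z) (F w) \<le> sq_dist C y y' / 3"
      unfolding F_def zz ww using key[OF m k(1) k'(1)] k(2) k'(2) by simp
    also have "\<dots> = tens_cost C z w" using nr True zz ww unfolding tens_cost_def by simp
    finally show ?thesis .
  next
    case False
    have "tens_cost C z w = 2" using nr False unfolding tens_cost_def by simp
    then show ?thesis using sq_le2[OF Dsq F_in[OF z] F_in[OF w]] by simp
  qed
qed

definition hh :: "((nat \<times> nat) \<times> 'c) set \<Rightarrow> 'd" where
  "hh P = F (SOME z. z \<in> P \<and> z \<in> Mset \<times> sq_carrier C)"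

lemma hh_pt: assumes my: "(m, y) \<in> Mset \<times> sq_carrier C" shows "hh (tens_pt C m y) = F (m, y)"
proof -
  let ?z = "SOME z. z \<in> tens_pt C m y \<and> z \<in> Mset \<times> sq_carrier C"
  have z: "?z \<in> tens_pt C m y \<and> ?z \<in> Mset \<times> sq_carrier C"
    by (rule someI[of _ "(m, y)"]) (use my pt_self[of m y C] in auto)
  then have "((m, y), ?z) \<in> tens_rel C" by (simp add: mem_pt)
  then have r: "(?z, (m, y)) \<in> tens_rel C" by (rule rel_sym)
  have "sq_dist D (F ?z) (F (m, y)) \<le> 0" using F_step[of ?z "(m, y)"] z my cost_rel[OF r] by simp
  then have "F ?z = F (m, y)" using sq_zero_iff[OF Dsq F_in F_in, of ?z "(m, y)"] sq_nonneg[OF Dsq F_in F_in, of ?z "(m, y)"] z my by simp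
  then show ?thesis unfolding hh_def by simp
qed

lemma hh_hom: "sq_hom (tens C) D hh"
  unfolding sq_hom_def tens_sel
proof (intro conjI ballI subsetI)
  fix Q assume "Q \<in> hh ` tens_carrier C"
  then obtain P where P: "P \<in> tens_carrier C" and Q: "Q = hh P" by blast
  obtain m y where P': "P = tens_pt C m y" "(m, y) \<in> Mset \<times> sq_carrier C" using P by (rule tens_carrierE)
  show "Q \<in> sq_carrier D" unfolding Q P'(1) hh_pt[OF P'(2)] by (rule F_in[OF P'(2)])
next
  fix P Q assume P: "P \<in> tens_carrier C" and Q: "Q \<in> tens_carrier C"
  obtain m y where P': "P = tens_pt C m y" "(m, y) \<in> Mset \<times> sq_carrier C" using P by (rule tens_carrierE)
  obtain n y' where Q': "Q = tens_pt C n y'" "(n, y') \<in> Mset \<times> sq_carrier C" using Q by (rule tens_carrierE)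
  show "sq_dist D (hh P) (hh Q) \<le> tens_dist C P Q"
  proof -
    have tri: "\<And>z w u. z \<in> Mset \<times> sq_carrier C \<Longrightarrow> w \<in> Mset \<times> sq_carrier C \<Longrightarrow> u \<in> Mset \<times> sq_carrier C \<Longrightarrow>
        sq_dist D (F z) (F u) \<le> sq_dist D (F z) (F w) + sq_dist D (F w) (F u)"
      using sq_tri[OF Dsq F_in F_in F_in] by blast
    have step: "\<And>z w. z \<in> Mset \<times> sq_carrier C \<Longrightarrow> w \<in> Mset \<times> sq_carrier C \<Longrightarrow> sq_dist D (F z) (F w) \<le> tens_cost C z w"
      by (rule F_step)
    show ?thesis unfolding P'(1) Q'(1) hh_pt[OF P'(2)] hh_pt[OF Q'(2)]
      by (rule dist_lower[where \<delta>="sq_dist D" and F=F, OF step tri P'(2) Q'(2)])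
  qed
next
  fix p assume p: "p \<in> M0"
  have l: "loc (msel p) p \<in> M0" using valid_loc[OF p valid_msel[OF p]] .
  have "hh (tens_sq C p) = F (msel p, sq_map C (loc (msel p) p))"
    unfolding tens_sq_eq[of C] by (rule hh_pt[OF tens_sq_in[OF Csq[OF ch col] p]])
  also have "\<dots> = g 0 (tens_pt (A 0) (msel p) (sq_map (A 0) (loc (msel p) p)))"
    by (rule F_S[OF valid_Mset[OF valid_msel[OF p]] l])
  also have "\<dots> = g 0 (tens_sq (A 0) p)" by (simp add: tens_sq_eq)
  also have "\<dots> = sq_map D p" using sq_homD(3)[OF ghom p] by simp
  finally show "hh (tens_sq C p) = sq_map D p" .
qed

lemma hh_comm: "P \<in> tens_carrier (A k) \<Longrightarrow> hh (tens_map (A k) C (c k) P) = g k P"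
proof -
  assume P: "P \<in> tens_carrier (A k)"
  obtain m x where P': "P = tens_pt (A k) m x" "(m, x) \<in> Mset \<times> sq_carrier (A k)" using P by (rule tens_carrierE)
  have mc: "(m, c k x) \<in> Mset \<times> sq_carrier C" using P'(2) cin[OF ch col] by auto
  show ?thesis unfolding P'(1) tens_map_pt[OF cS P'(2)] hh_pt[OF mc]
    using F_eq P'(2) by simp
qed

lemma univ:
  "(\<exists>h. sq_hom (tens C) D h \<and> (\<forall>k. \<forall>x\<in>sq_carrier (tens (A k)). h (tens_map (A k) C (c k) x) = g k x)) \<and>
   (\<forall>h h'. sq_hom (tens C) D h \<and> (\<forall>k. \<forall>x\<in>sq_carrier (tens (A k)). h (tens_map (A k) C (c k) x) = g k x) \<and>
           sq_hom (tens C) D h' \<and> (\<forall>k. \<forall>x\<in>sq_carrier (tens (A k)). h' (tens_map (A k) C (c k) x) = g k x) \<longrightarrow>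
           (\<forall>y\<in>sq_carrier (tens C). h y = h' y))"
proof (intro conjI allI impI ballI)
  show "\<exists>h. sq_hom (tens C) D h \<and> (\<forall>k. \<forall>x\<in>sq_carrier (tens (A k)). h (tens_map (A k) C (c k) x) = g k x)"
  proof (intro exI conjI allI ballI)
    show "sq_hom (tens C) D hh" by (rule hh_hom)
  next
    fix k x assume "x \<in> sq_carrier (tens (A k))"
    then show "hh (tens_map (A k) C (c k) x) = g k x" using hh_comm by simp
  qed
next
  fix h h' Y
  assume H: "sq_hom (tens C) D h \<and> (\<forall>k. \<forall>x\<in>sq_carrier (tens (A k)). h (tens_map (A k) C (c k) x) = g k x) \<and>
           sq_hom (tens C) D h' \<and> (\<forall>k. \<forall>x\<in>sq_carrier (tens (A k)). h' (tens_map (A k) C (c k) x) = g k x)"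
    and Y: "Y \<in> sq_carrier (tens C)"
  obtain m y where Y': "Y = tens_pt C m y" "(m, y) \<in> Mset \<times> sq_carrier C" using Y by (auto elim: tens_carrierE)
  obtain k x where x: "x \<in> sq_carrier (A k)" and yx: "y = c k x" using coverage[OF ch col, of y] Y'(2) by auto
  have mx: "(m, x) \<in> Mset \<times> sq_carrier (A k)" using Y'(2) x by auto
  have "Y = tens_map (A k) C (c k) (tens_pt (A k) m x)" unfolding Y'(1) yx tens_map_pt[OF cS mx] ..
  moreover have "tens_pt (A k) m x \<in> sq_carrier (tens (A k))" using tens_carrierI[OF mx] by simp
  ultimately have e: "h Y = g k (tens_pt (A k) m x)" "h' Y = g k (tens_pt (A k) m x)" using H by simp_all
  then show "h Y = h' Y" by simp
qed

end

end



theorem mainTheorem15: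
  fixes A :: "nat \<Rightarrow> 'a sqms" and a :: "nat \<Rightarrow> nat \<Rightarrow> 'a \<Rightarrow> 'a"
    and C :: "'c sqms" and c :: "nat \<Rightarrow> 'a \<Rightarrow> 'c"
  assumes "sq_chain A a"
    and "sq_colimit TYPE('d) A a C c"
    and "sq_colimit TYPE(nat \<times> 'a) A a C c"
  shows "sq_chain (\<lambda>k. tens (A k)) (\<lambda>k l. tens_map (A k) (A l) (a k l))
       \<and> sq_colimit TYPE('d) (\<lambda>k. tens (A k)) (\<lambda>k l. tens_map (A k) (A l) (a k l))
           (tens C) (\<lambda>k. tens_map (A k) C (c k))"
proof
  show "sq_chain (\<lambda>k. tens (A k)) (\<lambda>k l. tens_map (A k) (A l) (a k l))"
    by (rule tens_chain[OF assms(1) assms(3)])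
next
  show "sq_colimit TYPE('d) (\<lambda>k. tens (A k)) (\<lambda>k l. tens_map (A k) (A l) (a k l))
           (tens C) (\<lambda>k. tens_map (A k) C (c k))"
    unfolding sq_colimit_def
  proof (rule conjI)
    show "sq_cocone (\<lambda>k. tens (A k)) (\<lambda>k l. tens_map (A k) (A l) (a k l)) (tens C) (\<lambda>k. tens_map (A k) C (c k))"
      by (rule tens_cocone[OF assms(1) assms(3)])
  next
    show "\<forall>(D :: 'd sqms) g. sq_cocone (\<lambda>k. tens (A k)) (\<lambda>k l. tens_map (A k) (A l) (a k l)) D g \<longrightarrow>
        (\<exists>h. sq_hom (tens C) D h \<and> (\<forall>k. \<forall>x\<in>sq_carrier (tens (A k)). h (tens_map (A k) C (c k) x) = g k x)) \<and>
        (\<forall>h h'. sq_hom (tens C) D h \<and> (\<forall>k. \<forall>x\<in>sq_carrier (tens (A k)). h (tens_map (A k) C (c k) x) = g k x) \<and>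
                sq_hom (tens C) D h' \<and> (\<forall>k. \<forall>x\<in>sq_carrier (tens (A k)). h' (tens_map (A k) C (c k) x) = g k x) \<longrightarrow>
                (\<forall>y\<in>sq_carrier (tens C). h y = h' y))"
    proof (intro allI impI)
      fix D :: "'d sqms" and g
      assume coc: "sq_cocone (\<lambda>k. tens (A k)) (\<lambda>k l. tens_map (A k) (A l) (a k l)) D g"
      show "(\<exists>h. sq_hom (tens C) D h \<and> (\<forall>k. \<forall>x\<in>sq_carrier (tens (A k)). h (tens_map (A k) C (c k) x) = g k x)) \<and>
        (\<forall>h h'. sq_hom (tens C) D h \<and> (\<forall>k. \<forall>x\<in>sq_carrier (tens (A k)). h (tens_map (A k) C (c k) x) = g k x) \<and>
                sq_hom (tens C) D h' \<and> (\<forall>k. \<forall>x\<in>sq_carrier (tens (A k)). h' (tens_map (A k) C (c k) x) = g k x) \<longrightarrow>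
                (\<forall>y\<in>sq_carrier (tens C). h y = h' y))"
        by (rule univ[OF assms(1) assms(3) coc])
    qed
  qed
qed



end
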